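(* Let $G=(V,E)$ be a hypergraph, $\{w_A\}_{A\in E}$ and $\lambda$ complex numbers, and $\mathcal{C}=\{C_\gamma\}$ a family of pairwise disjoint nonempty subsets of $V$. Then $$\int\mathcal{D}(\psi,\bar\psi)\Big(\prod_\gamma f_{C_\gamma}^{(\lambda)}\Big)\exp\Big[\lambda\sum_i\bar\psi_i\psi_i+\sum_{A\in E}w_Af_A^{(\lambda)}\Big]=\sum_{F\in\mathcal{F}(G;\mathcal{C})}\Big(\prod_{A\in F}w_A\Big)\lambda^{k(F)-\sum_\gamma(|C_\gamma|-1)},$$ where $\mathcal{F}(G;\mathcal{C})$ is the set of spanning hyperforests $F$ of $G$ that contain none of the $C_\gamma$ as hyperedges and such that $(V,F\cup\{C_\gamma\})$ is still a hyperforest (acyclic).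
   Context: A hypergraph is a pair $G=(V,E)$ with $V$ finite and $E$ a set of subsets of $V$ each of cardinality at least 2. Walks, connected components (isolated vertices included) and cycles (walks $(v_0,e_1,\ldots,e_k,v_k)$ with $v_{i-1},v_i\in e_i$, $v_0,\ldots,v_{k-1}$ distinct, $v_k=v_0$, distinct $e_i$, $k\ge2$) as usual; a hyperforest has no cycles. A spanning hyperforest is $F\subseteq E$ with $(V,F)$ a hyperforest; $k(F)$ is the number of components of $(V,F)$. Grassmann generators $\psi_i,\bar\psi_i$ ($i\in V$) over $\mathbb{C}$; $\tau_A=\prod_{i\in A}\bar\psi_i\psi_i$ ($\tau_\emptyset=1$); $f_A^{(\lambda)}=\lambda(1-|A|)\tau_A+\sum_{i\in A}\tau_{A\setminus\{i\}}-\sum_{i,j\in A,\ i\neq j}\bar\psi_i\psi_j\,\tau_{A\setminus\{i,j\}}$ (so $f_{\{i\}}^{(\lambda)}=1$); $\mathcal{D}(\psi,\bar\psi)=\prod_{i\in V}d\psi_i\,d\bar\psi_i$ with $\int d\psi_i\,d\bar\psi_i\,\bar\psi_i\psi_i=1$ and integrals of $1,\psi_i,\bar\psi_i$ equal to $0$. *)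

theory Defs
  imports Complex_Main "HOL-Library.Product_Lexorder"
begin

definition hypergraph :: "'v set \<Rightarrow> 'v set set \<Rightarrow> bool" where
  "hypergraph V E \<longleftrightarrow> finite V \<and> (\<forall>A\<in>E. A \<subseteq> V \<and> card A \<ge> 2)"

text \<open>A cycle: vertices vs 0 .. vs k, edges es 0 .. es (k-1) (es i plays the role of e_(i+1)),
  with vs i, vs (i+1) in es i, vs 0..vs (k-1) distinct, vs k = vs 0, distinct edges, k >= 2.\<close>
definition has_cycle :: "'v set set \<Rightarrow> bool" where
  "has_cycle F \<longleftrightarrow> (\<exists>(k::nat) (vs::nat \<Rightarrow> 'v) (es::nat \<Rightarrow> 'v set).
      k \<ge> 2 \<and> (\<forall>i<k. es i \<in> F \<and> vs i \<in> es i \<and> vs (Suc i) \<in> es i)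
      \<and> inj_on vs {..<k} \<and> vs k = vs 0 \<and> inj_on es {..<k})"

definition hyperforest :: "'v set \<Rightarrow> 'v set set \<Rightarrow> bool" where
  "hyperforest V F \<longleftrightarrow> \<not> has_cycle F"

definition adj_rel :: "'v set \<Rightarrow> 'v set set \<Rightarrow> ('v \<times> 'v) set" where
  "adj_rel V F = {(i, j). i \<in> V \<and> j \<in> V \<and> (\<exists>A\<in>F. i \<in> A \<and> j \<in> A)}"

definition ncomp :: "'v set \<Rightarrow> 'v set set \<Rightarrow> nat" where
  "ncomp V F = card (V // ((adj_rel V F)\<^sup>*))"

text \<open>Generators: (i,False) is psi_i, (i,True) is psibar_i. An element is a coefficient
  function on sets of generators; the set S stands for the product of its generators
  in increasing order (lexicographic order on 'v x bool).\<close>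
type_synonym 'v gr = "('v \<times> bool) set \<Rightarrow> complex"

definition gsign :: "('v::linorder \<times> bool) set \<Rightarrow> ('v \<times> bool) set \<Rightarrow> complex" where
  "gsign S T = (-1) ^ card {(s, t). s \<in> S \<and> t \<in> T \<and> t < s}"

definition gmul :: "'v::linorder gr \<Rightarrow> 'v gr \<Rightarrow> 'v gr" where
  "gmul f g = (\<lambda>U. \<Sum>S\<in>Pow U. gsign S (U - S) * f S * g (U - S))"

definition gadd :: "'v gr \<Rightarrow> 'v gr \<Rightarrow> 'v gr" where
  "gadd f g = (\<lambda>U. f U + g U)"

definition gsmult :: "complex \<Rightarrow> 'v gr \<Rightarrow> 'v gr" where
  "gsmult c f = (\<lambda>U. c * f U)"

definition gsum :: "('a \<Rightarrow> 'v gr) \<Rightarrow> 'a set \<Rightarrow> 'v gr" where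
  "gsum f I = (\<lambda>U. \<Sum>a\<in>I. f a U)"

definition gscalar :: "complex \<Rightarrow> 'v gr" where
  "gscalar c = (\<lambda>U. if U = {} then c else 0)"

definition gone :: "'v gr" where
  "gone = gscalar 1"

definition ggen :: "'v \<times> bool \<Rightarrow> 'v gr" where
  "ggen x = (\<lambda>U. if U = {x} then 1 else 0)"

definition psi :: "'v \<Rightarrow> 'v gr" where
  "psi i = ggen (i, False)"

definition psibar :: "'v \<Rightarrow> 'v gr" where
  "psibar i = ggen (i, True)"

definition glistprod :: "'v::linorder gr list \<Rightarrow> 'v gr" where
  "glistprod xs = foldr gmul xs gone"

primrec gpow :: "'v::linorder gr \<Rightarrow> nat \<Rightarrow> 'v gr" where
  "gpow f 0 = gone"
| "gpow f (Suc n) = gmul f (gpow f n)"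

text \<open>Exponential of an element of the Grassmann algebra on the generators of V.
  For elements with zero body (nilpotent) the series terminates after 2|V| terms.\<close>
definition gexp :: "'v::linorder set \<Rightarrow> 'v gr \<Rightarrow> 'v gr" where
  "gexp V f = gsum (\<lambda>n. gsmult (1 / of_nat (fact n)) (gpow f n)) {0..2 * card V}"

definition tau :: "'v::linorder set \<Rightarrow> 'v gr" where
  "tau A = glistprod (map (\<lambda>i. gmul (psibar i) (psi i)) (sorted_list_of_set A))"

definition fpoly :: "complex \<Rightarrow> 'v::linorder set \<Rightarrow> 'v gr" where
  "fpoly lam A =
     gadd (gadd (gsmult (lam * (1 - of_nat (card A))) (tau A))
                (gsum (\<lambda>i. tau (A - {i})) A))
          (gsmult (-1) (gsum (\<lambda>(i, j). gmul (gmul (psibar i) (psi j)) (tau (A - {i, j})))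
                          {(i, j). i \<in> A \<and> j \<in> A \<and> i \<noteq> j}))"

text \<open>Berezin integral with measure prod_i dpsi_i dpsibar_i: the linear functional picking
  the coefficient of the top monomial, normalised so that the integral of tau V is 1.\<close>
definition berezin :: "'v::linorder set \<Rightarrow> 'v gr \<Rightarrow> complex" where
  "berezin V f = f (V \<times> UNIV) / tau V (V \<times> UNIV)"

definition hyperforests_avoiding :: "'v set \<Rightarrow> 'v set set \<Rightarrow> 'v set list \<Rightarrow> 'v set set set" where
  "hyperforests_avoiding V E Cs = {F. F \<subseteq> E \<and> hyperforest V F \<and> (\<forall>C\<in>set Cs. C \<notin> F)
       \<and> hyperforest V (F \<union> set Cs)}"

end

theory Submission
  imports Defs
begin

definition invs :: "('v::linorder \<times> bool) set \<Rightarrow> ('v \<times> bool) set \<Rightarrow> (('v \<times> bool) \<times> ('v \<times> bool)) set" where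
  "invs S T = {(s, t). s \<in> S \<and> t \<in> T \<and> t < s}"

lemma gsign_invs: "gsign S T = (-1) ^ card (invs S T)"
  by (simp add: gsign_def invs_def)

lemma finite_invs: "finite S \<Longrightarrow> finite T \<Longrightarrow> finite (invs S T)"
  by (rule finite_subset[of _ "S \<times> T"]) (auto simp: invs_def)

lemma gsign_Un1:
  assumes "A \<inter> B = {}" "finite A" "finite B" "finite C"
  shows "gsign (A \<union> B) C = gsign A C * gsign B C"
proof -
  have "invs (A \<union> B) C = invs A C \<union> invs B C" by (auto simp: invs_def)
  moreover have "invs A C \<inter> invs B C = {}" using assms(1) by (auto simp: invs_def)
  ultimately have "card (invs (A \<union> B) C) = card (invs A C) + card (invs B C)"
    using assms by (simp add: card_Un_disjoint finite_invs)
  then show ?thesis by (simp add: gsign_invs power_add)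
qed

lemma gsign_Un2:
  assumes "B \<inter> C = {}" "finite A" "finite B" "finite C"
  shows "gsign A (B \<union> C) = gsign A B * gsign A C"
proof -
  have "invs A (B \<union> C) = invs A B \<union> invs A C" by (auto simp: invs_def)
  moreover have "invs A B \<inter> invs A C = {}" using assms(1) by (auto simp: invs_def)
  ultimately have "card (invs A (B \<union> C)) = card (invs A B) + card (invs A C)"
    using assms by (simp add: card_Un_disjoint finite_invs)
  then show ?thesis by (simp add: gsign_invs power_add)
qed

lemma gsign_empty1[simp]: "gsign {} T = 1" and gsign_empty2[simp]: "gsign S {} = 1"
  by (simp_all add: gsign_def)

lemma gsign_swap:
  assumes "A \<inter> B = {}" "finite A" "finite B"
  shows "gsign A B * gsign B A = (-1) ^ (card A * card B)"
proof -
  have e: "A \<times> B = invs A B \<union> (prod.swap ` invs B A)"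
  proof
    show "A \<times> B \<subseteq> invs A B \<union> (prod.swap ` invs B A)"
    proof clarify
      fix a b assume ab: "a \<in> A" "b \<in> B" and nn: "(a, b) \<notin> prod.swap ` invs B A"
      have "a \<noteq> b" using ab assms(1) by auto
      show "(a, b) \<in> invs A B"
      proof (cases "b < a")
        case True thus ?thesis using ab by (auto simp: invs_def)
      next
        case False hence "a < b" using \<open>a \<noteq> b\<close> by auto
        hence "(b, a) \<in> invs B A" using ab by (auto simp: invs_def)
        hence "prod.swap (b, a) \<in> prod.swap ` invs B A" by blast
        thus ?thesis using nn by simp
      qed
    qed
  qed (auto simp: invs_def)
  have d: "invs A B \<inter> (prod.swap ` invs B A) = {}" by (auto simp: invs_def)
  have "card (A \<times> B) = card (invs A B) + card (prod.swap ` invs B A)"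
    unfolding e using assms by (intro card_Un_disjoint d) (auto intro: finite_invs)
  moreover have "card (prod.swap ` invs B A) = card (invs B A)"
    by (rule card_image[OF inj_swap])
  ultimately show ?thesis by (simp add: gsign_invs power_add[symmetric] card_cartesian_product)
qed

lemma gsign_sq: "gsign A B * gsign A B = 1"
  by (simp add: gsign_def power_mult_distrib[symmetric] power_add[symmetric] flip: power_add)

lemma gsign_even_sym:
  assumes "A \<inter> B = {}" "finite A" "finite B" "even (card A)"
  shows "gsign A B = gsign B A"
proof -
  have "gsign A B * gsign B A = 1" using gsign_swap[OF assms(1-3)] assms(4) by simp
  hence "gsign A B * (gsign A B * gsign B A) = gsign A B" by simp
  thus ?thesis by (simp add: mult.assoc[symmetric] gsign_sq)
qed

lemma gmul_infinite: "infinite U \<Longrightarrow> gmul f g U = 0"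
  by (simp add: gmul_def)

lemma gmul_assoc: "gmul (gmul f g) h = gmul f (gmul g h)"
proof (rule ext)
  fix U :: "('a \<times> bool) set"
  show "gmul (gmul f g) h U = gmul f (gmul g h) U"
  proof (cases "finite U")
    case False thus ?thesis by (simp add: gmul_def)
  next
    case fin: True
    define t where "t R T = gsign R (U-R) * gsign T (U-R-T) * (f R * (g T * h (U-R-T)))" for R T
    define phi where "phi S R = gsign S (U-S) * gsign R (S-R) * (f R * (g (S-R) * h (U-S)))" for S R
    have "gmul (gmul f g) h U = (\<Sum>S\<in>Pow U. \<Sum>R\<in>Pow S. phi S R)"
      unfolding gmul_def phi_def
      by (rule sum.cong[OF refl]) (simp add: sum_distrib_left sum_distrib_right mult_ac)
    also have "\<dots> = (\<Sum>S\<in>Pow U. \<Sum>R\<in>{R. R \<in> Pow U \<and> R \<subseteq> S}. phi S R)"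
      by (rule sum.cong[OF refl], rule sum.cong) auto
    also have "\<dots> = (\<Sum>R\<in>Pow U. \<Sum>S\<in>{S. S \<in> Pow U \<and> R \<subseteq> S}. phi S R)"
      by (rule sum.swap_restrict) (use fin in auto)
    also have "\<dots> = (\<Sum>R\<in>Pow U. \<Sum>T\<in>Pow (U-R). t R T)"
    proof (rule sum.cong[OF refl])
      fix R assume R: "R \<in> Pow U"
      show "(\<Sum>S\<in>{S. S \<in> Pow U \<and> R \<subseteq> S}. phi S R) = (\<Sum>T\<in>Pow (U-R). t R T)"
      proof (rule sym, rule sum.reindex_bij_witness[where j="\<lambda>T. R \<union> T" and i="\<lambda>S. S - R"])
        fix T assume T: "T \<in> Pow (U - R)"
        have fR: "finite R" and fT: "finite T" and fW: "finite (U - R - T)"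
          using R T fin by (auto intro: finite_subset)
        have d1: "R \<inter> T = {}" using T by auto
        have e1: "(R \<union> T) - R = T" "U - (R \<union> T) = U - R - T" using T by auto
        have e2: "U - R = T \<union> (U - R - T)" using T by auto
        have s1: "gsign (R \<union> T) (U - R - T) = gsign R (U-R-T) * gsign T (U-R-T)"
          by (rule gsign_Un1) (use d1 fR fT fW in auto)
        have "gsign R (U - R) = gsign R (T \<union> (U - R - T))" using e2 by (rule arg_cong)
        also have "\<dots> = gsign R T * gsign R (U-R-T)"
          by (rule gsign_Un2) (use fR fT fW in auto)
        finally have s2: "gsign R (U - R) = gsign R T * gsign R (U-R-T)" .
        show "phi (R \<union> T) R = t R T"
          unfolding phi_def t_def e1 s1 s2 by (simp add: mult_ac)
      qed (use R in auto)
    qed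
    also have "\<dots> = gmul f (gmul g h) U"
      unfolding gmul_def t_def
    proof (rule sum.cong[OF refl])
      fix R
      show "(\<Sum>T\<in>Pow (U - R). gsign R (U - R) * gsign T (U - R - T) * (f R * (g T * h (U - R - T)))) =
         gsign R (U - R) * f R * (\<Sum>S\<in>Pow (U - R). gsign S (U - R - S) * g S * h (U - R - S))"
        by (subst sum_distrib_left, rule sum.cong[OF refl]) (simp only: mult_ac)
    qed
    finally show ?thesis .
  qed
qed

lemma gmul_gadd_left: "gmul (gadd f g) h = gadd (gmul f h) (gmul g h)"
  by (rule ext) (simp add: gmul_def gadd_def distrib_left distrib_right sum.distrib)

lemma gmul_gadd_right: "gmul h (gadd f g) = gadd (gmul h f) (gmul h g)"
  by (rule ext) (simp add: gmul_def gadd_def distrib_left distrib_right sum.distrib)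

lemma gmul_gone_left: "gmul gone f U = (if finite U then f U else 0)"
proof (cases "finite U")
  case True
  have "gmul gone f U = (\<Sum>S\<in>Pow U. if S = {} then f U else 0)"
    unfolding gmul_def gone_def gscalar_def by (rule sum.cong) auto
  also have "\<dots> = f U" using True by (simp add: sum.delta)
  finally show ?thesis using True by simp
qed (simp add: gmul_def)

lemma gmul_gone_right: "gmul f gone U = (if finite U then f U else 0)"
proof (cases "finite U")
  case True
  have "gmul f gone U = (\<Sum>S\<in>Pow U. if S = U then f U else 0)"
    unfolding gmul_def gone_def gscalar_def by (rule sum.cong) auto
  also have "\<dots> = f U" using True by (simp add: sum.delta')
  finally show ?thesis using True by simp
qed (simp add: gmul_def)

definition evsupp :: "'v gr \<Rightarrow> bool" where
  "evsupp f \<longleftrightarrow> (\<forall>U. f U \<noteq> 0 \<longrightarrow> finite U \<and> even (card U))"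

lemma gmul_comm_ev:
  assumes "evsupp f"
  shows "gmul f g = gmul g f"
proof (rule ext)
  fix U :: "('a \<times> bool) set"
  show "gmul f g U = gmul g f U"
  proof (cases "finite U")
    case False thus ?thesis by (simp add: gmul_def)
  next
    case fin: True
    show ?thesis unfolding gmul_def
    proof (rule sum.reindex_bij_witness[where i="\<lambda>S. U - S" and j="\<lambda>S. U - S"])
      fix S assume S: "S \<in> Pow U"
      show "gsign (U - S) (U - (U - S)) * g (U - S) * f (U - (U - S)) = gsign S (U - S) * f S * g (U - S)"
      proof (cases "f S = 0")
        case True thus ?thesis using S by (simp add: Diff_Diff_Int Int_absorb1)
      next
        case False
        hence ev: "even (card S)" using assms by (auto simp: evsupp_def)
        have "U - (U - S) = S" using S by auto
        moreover have "gsign S (U - S) = gsign (U - S) S"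
          by (rule gsign_even_sym) (use S fin ev in \<open>auto intro: finite_subset\<close>)
        ultimately show ?thesis by (simp add: mult_ac)
      qed
    qed auto
  qed
qed

lemma evsupp_gmul: "evsupp f \<Longrightarrow> evsupp g \<Longrightarrow> evsupp (gmul f g)"
  unfolding evsupp_def
proof (intro allI impI)
  fix U assume ef: "\<forall>U. f U \<noteq> 0 \<longrightarrow> finite U \<and> even (card U)"
    and eg: "\<forall>U. g U \<noteq> 0 \<longrightarrow> finite U \<and> even (card U)" and nz: "gmul f g U \<noteq> 0"
  hence fin: "finite U" by (auto simp: gmul_def)
  from nz obtain S where S: "S \<in> Pow U" "gsign S (U - S) * f S * g (U - S) \<noteq> 0"
    unfolding gmul_def by (meson sum.neutral)
  hence "even (card S)" "even (card (U - S))" using ef eg by auto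
  moreover have "card U = card S + card (U - S)"
    using S(1) fin by (metis PowD card_Diff_subset add_diff_inverse_nat card_mono finite_subset not_less)
  ultimately show "finite U \<and> even (card U)" using fin by simp
qed

lemma evsupp_gadd: "evsupp f \<Longrightarrow> evsupp g \<Longrightarrow> evsupp (gadd f g)"
  unfolding evsupp_def gadd_def by (metis add.left_neutral add.right_neutral)

lemma evsupp_gone: "evsupp gone"
  by (auto simp: evsupp_def gone_def gscalar_def)

lemma evsupp_gscalar: "evsupp (gscalar c)"
  by (auto simp: evsupp_def gscalar_def)

lemma evsupp_zero: "evsupp (\<lambda>U. 0)"
  by (auto simp: evsupp_def)

lemma evsupp_uminus: "evsupp f \<Longrightarrow> evsupp (\<lambda>U. - f U)"
  by (auto simp: evsupp_def)

lemma gsign_single: "gsign {a} {b} = (if b < a then -1 else 1)"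
proof -
  have "{(s, t). s \<in> {a} \<and> t \<in> {b} \<and> t < s} = (if b < a then {(a, b)} else {})" by auto
  thus ?thesis by (simp add: gsign_def)
qed

lemma gmul_ggen: "gmul (ggen a) (ggen b) U = (if U = {a, b} \<and> a \<noteq> b then (if b < a then -1 else 1) else 0)"
proof (cases "finite U")
  case fin: True
  have "gmul (ggen a) (ggen b) U = (\<Sum>S\<in>Pow U. if S = {a} then (if a \<in> U \<and> U - {a} = {b} then gsign {a} {b} else 0) else 0)"
    unfolding gmul_def ggen_def by (rule sum.cong) auto
  also have "\<dots> = (if a \<in> U \<and> U - {a} = {b} then gsign {a} {b} else 0)"
    using fin by (subst sum.delta) auto
  also have "\<dots> = (if U = {a, b} \<and> a \<noteq> b then (if b < a then -1 else 1) else 0)"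
    by (auto simp: gsign_single)
  finally show ?thesis .
next
  case False
  hence "U \<noteq> {a, b}" by auto
  thus ?thesis using False by (simp add: gmul_def)
qed

lemma evsupp_gmul_ggen: "evsupp (gmul (ggen a) (ggen b))"
  by (auto simp: evsupp_def gmul_ggen split: if_splits)

definition gneg :: "'v gr \<Rightarrow> 'v gr" where "gneg f = (\<lambda>U. - f U)"

lemma gmul_gneg_left: "gmul (gneg f) g = gneg (gmul f g)"
  by (rule ext) (simp add: gmul_def gneg_def sum_negf)
lemma gmul_gneg_right: "gmul f (gneg g) = gneg (gmul f g)"
  by (rule ext) (simp add: gmul_def gneg_def sum_negf)
lemma gneg_gneg: "gneg (gneg f) = f"
  by (simp add: gneg_def)

lemma ggen_anti: "gmul (ggen a) (ggen b) = gneg (gmul (ggen b) (ggen a))"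
  by (rule ext) (auto simp: gneg_def gmul_ggen insert_commute)

lemma gen4: "gmul (gmul (ggen a) (ggen b)) (gmul (ggen c) (ggen d)) =
   gneg (gmul (gmul (ggen a) (ggen d)) (gmul (ggen c) (ggen b)))"
proof -
  have "gmul (ggen b) (gmul (ggen c) (ggen d)) = gneg (gmul (ggen d) (gmul (ggen c) (ggen b)))"
  proof -
    have "gmul (ggen b) (gmul (ggen c) (ggen d)) = gmul (ggen b) (gneg (gmul (ggen d) (ggen c)))"
      by (subst ggen_anti) rule
    also have "\<dots> = gneg (gmul (gmul (ggen b) (ggen d)) (ggen c))"
      by (simp add: gmul_gneg_right gmul_assoc)
    also have "\<dots> = gmul (gmul (ggen d) (ggen b)) (ggen c)"
      by (subst ggen_anti) (simp add: gmul_gneg_left gneg_gneg)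
    also have "\<dots> = gmul (ggen d) (gneg (gmul (ggen c) (ggen b)))"
      by (simp add: gmul_assoc ggen_anti[of c b] gmul_gneg_right gneg_gneg)
    also have "\<dots> = gneg (gmul (ggen d) (gmul (ggen c) (ggen b)))"
      by (simp add: gmul_gneg_right)
    finally show ?thesis .
  qed
  thus ?thesis by (simp add: gmul_assoc gmul_gneg_right)
qed

typedef (overloaded) ('v::linorder) E = "{f :: 'v gr. evsupp f}" morphisms coef Abs_E
  by (rule exI[of _ "\<lambda>U. 0"]) (simp add: evsupp_zero)

setup_lifting type_definition_E

instantiation E :: (linorder) comm_ring_1
begin
lift_definition zero_E :: "'v::linorder E" is "\<lambda>U. 0" by (rule evsupp_zero)
lift_definition one_E :: "'v::linorder E" is gone by (rule evsupp_gone)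
lift_definition plus_E :: "'v::linorder E \<Rightarrow> 'v E \<Rightarrow> 'v E" is gadd by (rule evsupp_gadd)
lift_definition times_E :: "'v::linorder E \<Rightarrow> 'v E \<Rightarrow> 'v E" is gmul by (rule evsupp_gmul)
lift_definition uminus_E :: "'v::linorder E \<Rightarrow> 'v E" is "\<lambda>f U. - f U" by (rule evsupp_uminus)
lift_definition minus_E :: "'v::linorder E \<Rightarrow> 'v E \<Rightarrow> 'v E" is "\<lambda>f g U. f U - g U"
  unfolding evsupp_def by (metis diff_self diff_zero eq_iff_diff_eq_0)
instance
proof
  fix a b c :: "'v::linorder E"
  show "a * b * c = a * (b * c)" by transfer (rule gmul_assoc)
  show "a * b = b * a" by transfer (rule gmul_comm_ev)
  show "1 * a = a" by transfer (rule ext, auto simp: gmul_gone_left evsupp_def)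
  show "(a + b) * c = a * c + b * c" by transfer (rule gmul_gadd_left)
  show "a + b + c = a + (b + c)" by transfer (simp add: gadd_def add.assoc)
  show "a + b = b + a" by transfer (simp add: gadd_def add.commute)
  show "0 + a = a" by transfer (simp add: gadd_def)
  show "- a + a = 0" by transfer (simp add: gadd_def)
  show "a - b = a + - b" by transfer (simp add: gadd_def)
  show "(0::'v E) \<noteq> 1" by transfer (metis gone_def gscalar_def one_neq_zero)
qed
end

lemma coef_times: "coef (a * b) = gmul (coef a) (coef b)" by transfer rule
lemma coef_plus: "coef (a + b) = gadd (coef a) (coef b)" by transfer rule
lemma coef_one: "coef 1 = gone" by transfer rule
lemma coef_zero: "coef 0 = (\<lambda>U. 0)" by transfer rule
lemma coef_uminus: "coef (- a) = (\<lambda>U. - coef a U)" by transfer rule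
lemma coef_evsupp: "evsupp (coef a)" by transfer
lemma coef_finite: "coef a U \<noteq> 0 \<Longrightarrow> finite U"
  using coef_evsupp[of a] by (auto simp: evsupp_def)

lift_definition sc :: "complex \<Rightarrow> 'v::linorder E" is gscalar by (rule evsupp_gscalar)

lemma coef_sc: "coef (sc c) = gscalar c" by transfer rule

lemma coef_sc_times: "coef (sc c * a) = gsmult c (coef a)"
proof (rule ext)
  fix U
  show "coef (sc c * a) U = gsmult c (coef a) U"
  proof (cases "finite U")
    case True
    have "coef (sc c * a) U = (\<Sum>S\<in>Pow U. if S = {} then c * coef a U else 0)"
      unfolding coef_times coef_sc gmul_def gscalar_def by (rule sum.cong) auto
    also have "\<dots> = c * coef a U" using True by (simp add: sum.delta)
    finally show ?thesis by (simp add: gsmult_def)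
  next
    case False
    thus ?thesis using coef_finite[of a U] by (auto simp: coef_times gmul_def gsmult_def)
  qed
qed

lemma sc_add: "sc (a + b) = sc a + sc b" by transfer (auto simp: gscalar_def gadd_def)
lemma sc_mult: "sc (a * b) = (sc a * sc b :: 'v::linorder E)"
  by (rule coef_inject[THEN iffD1]) (auto simp: coef_sc_times coef_sc gscalar_def gsmult_def)
lemma sc_one: "sc 1 = 1" by transfer (simp add: gone_def)
lemma sc_zero: "sc 0 = 0" by transfer (simp add: gscalar_def)
lemma sc_uminus: "sc (- a) = - sc a" by transfer (auto simp: gscalar_def)
lemma sc_of_nat: "sc (of_nat n) = of_nat n"
  by (induction n) (simp_all add: sc_zero sc_add sc_one)
lemma sc_diff: "sc (a - b) = sc a - sc b"
  unfolding diff_conv_add_uminus sc_add sc_uminus by (rule refl)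
lemma sc_neg1: "sc (-1) * a = - a"
  by (simp add: sc_uminus sc_one)

lemma coef_sum: "coef (sum f I) = gsum (\<lambda>i. coef (f i)) I"
proof (cases "finite I")
  case True thus ?thesis
    by (induction rule: finite_induct) (auto simp: coef_zero coef_plus gsum_def gadd_def)
next
  case False thus ?thesis by (simp add: coef_zero gsum_def)
qed

lemma coef_power: "coef (a ^ n) = gpow (coef a) n"
  by (induction n) (simp_all add: coef_one coef_times)

lemma coef_prod_list: "coef (prod_list (map f xs)) = foldr gmul (map (\<lambda>x. coef (f x)) xs) gone"
  by (induction xs) (simp_all add: coef_one coef_times)

lift_definition e :: "'v::linorder \<Rightarrow> 'v \<Rightarrow> 'v E" is "\<lambda>i j. gmul (psibar i) (psi j)"
  unfolding psi_def psibar_def by (rule evsupp_gmul_ggen)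

lemma coef_e: "coef (e i j) = gmul (psibar i) (psi j)" by transfer rule

lemma e_rel: "e i j * e k l = - (e i l * e k j)"
  by transfer (unfold psi_def psibar_def, subst gen4, simp add: gneg_def)

lemma E_zero_if_neg: "(a::'v::linorder E) = - a \<Longrightarrow> a = 0"
proof -
  assume "a = - a"
  hence "a + a = 0" by (metis add.right_inverse)
  hence "sc (1/2) * (a + a) = 0" by simp
  moreover have "sc (1/2) * (a + a) = (sc (1/2) + sc (1/2)) * a" by (simp add: algebra_simps)
  moreover have "sc (1/2) + sc (1/2) = (sc 1 :: 'v E)" by (simp flip: sc_add)
  ultimately show "a = 0" by (simp add: sc_one)
qed

lemma e_same1: "e i j * e i l = 0"
  by (rule E_zero_if_neg) (subst (2) mult.commute, rule e_rel)
lemma e_same2: "e i j * e k j = 0"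
  by (rule E_zero_if_neg) (rule e_rel)

definition x :: "'v::linorder \<Rightarrow> 'v E" where "x i = e i i"
definition tauE :: "'v::linorder set \<Rightarrow> 'v E" where "tauE A = (\<Prod>i\<in>A. x i)"
definition Sf :: "'v::linorder set \<Rightarrow> 'v E" where
  "Sf A = (\<Sum>i\<in>A. tauE (A - {i})) - (\<Sum>i\<in>A. \<Sum>j\<in>A - {i}. e i j * tauE (A - {i, j}))"
definition y :: "'v::linorder \<Rightarrow> 'v \<Rightarrow> 'v E" where "y v i = x i + x v - e i v - e v i"
definition Y :: "'v::linorder \<Rightarrow> 'v set \<Rightarrow> 'v E" where "Y v A = (\<Prod>i\<in>A - {v}. y v i)"
definition Fp :: "complex \<Rightarrow> 'v::linorder set \<Rightarrow> 'v E" where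
  "Fp lam A = sc (lam * (1 - of_nat (card A))) * tauE A + Sf A"

lemma x_sq: "x i * x i = 0" by (simp add: x_def e_same1)
lemma e_x1: "e i j * x i = 0" by (simp add: x_def e_same1)
lemma e_x2: "e i j * x j = 0" by (simp add: x_def e_same2)
lemma x_e1: "x i * e i j = 0" by (simp add: x_def e_same1)
lemma x_e2: "x j * e i j = 0" by (simp add: x_def e_same2)

lemma tau_insert: "finite A \<Longrightarrow> k \<notin> A \<Longrightarrow> tauE (insert k A) = x k * tauE A"
  by (simp add: tauE_def)
lemma tau_split: "finite A \<Longrightarrow> v \<in> A \<Longrightarrow> tauE A = x v * tauE (A - {v})"
  by (simp add: tauE_def prod.remove)
lemma tau_x: "finite A \<Longrightarrow> v \<in> A \<Longrightarrow> tauE A * x v = 0"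
  by (simp add: tau_split[of A v] mult.commute[of "x v"] mult.assoc x_sq)
lemma tau_e1: "finite A \<Longrightarrow> i \<in> A \<Longrightarrow> tauE A * e i j = 0"
  by (simp add: tau_split[of A i] mult.assoc mult.commute[of "x i"] x_e1)
lemma tau_e2: "finite A \<Longrightarrow> j \<in> A \<Longrightarrow> tauE A * e i j = 0"
  by (simp add: tau_split[of A j] mult.assoc mult.commute[of "x j"] x_e2)
lemma tau_empty: "tauE {} = 1" by (simp add: tauE_def)

lemma c1:
  assumes "finite A" "k \<notin> A"
  shows "Sf A * x k = (\<Sum>i\<in>A. tauE (insert k A - {i})) - (\<Sum>i\<in>A. \<Sum>j\<in>A - {i}. e i j * tauE (insert k A - {i, j}))"
proof -
  have a: "tauE (A - {i}) * x k = tauE (insert k A - {i})" if "i \<in> A" for i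
  proof -
    have "insert k A - {i} = insert k (A - {i})" using that assms by auto
    thus ?thesis using assms by (simp add: tau_insert mult.commute)
  qed
  have b: "e i j * tauE (A - {i, j}) * x k = e i j * tauE (insert k A - {i, j})" if "i \<in> A" "j \<in> A" for i j
  proof -
    have "insert k A - {i, j} = insert k (A - {i, j})" using that assms by auto
    thus ?thesis using assms by (simp add: tau_insert mult_ac)
  qed
  show ?thesis unfolding Sf_def left_diff_distrib sum_distrib_right
    by (intro arg_cong2[where f="(-)"] sum.cong refl) (auto simp: a b)
qed

lemma c2:
  assumes "finite A" "v \<in> A"
  shows "Sf A * x v = tauE A"
proof -
  have z: "e i j * tauE (A - {i, j}) * x v = 0" if "i \<in> A" "j \<in> A - {i}" for i j
  proof (cases "v = i \<or> v = j")
    case True thus ?thesis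
      by (metis mult.left_commute mult.commute mult.assoc e_x1 e_x2 mult_zero_left)
  next
    case False hence "v \<in> A - {i, j}" using assms by auto
    thus ?thesis using assms by (simp add: mult.assoc tau_x)
  qed
  have "(\<Sum>i\<in>A. tauE (A - {i}) * x v) = tauE (A - {v}) * x v + (\<Sum>i\<in>A - {v}. tauE (A - {i}) * x v)"
    using assms by (simp add: sum.remove)
  also have "(\<Sum>i\<in>A - {v}. tauE (A - {i}) * x v) = 0"
    using assms by (intro sum.neutral) (auto intro: tau_x)
  also have "tauE (A - {v}) * x v = tauE A" using assms by (simp add: tau_split[of A v] mult.commute)
  finally have 1: "(\<Sum>i\<in>A. tauE (A - {i}) * x v) = tauE A" by simp
  have 2: "(\<Sum>i\<in>A. \<Sum>j\<in>A - {i}. e i j * tauE (A - {i, j}) * x v) = 0"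
    by (intro sum.neutral ballI) (simp add: z)
  show ?thesis unfolding Sf_def left_diff_distrib sum_distrib_right 1 2 by simp
qed

lemma c3:
  assumes "finite A" "v \<in> A"
  shows "Sf A * e k v = (\<Sum>j\<in>A. e k j * tauE (A - {j}))"
proof -
  have fA: "finite (A - X)" for X using assms by auto
  have 1: "(\<Sum>i\<in>A. tauE (A - {i}) * e k v) = tauE (A - {v}) * e k v"
  proof -
    have "(\<Sum>i\<in>A - {v}. tauE (A - {i}) * e k v) = 0"
      using assms by (intro sum.neutral ballI tau_e2) auto
    thus ?thesis using assms by (simp add: sum.remove)
  qed
  have t: "e v j * tauE (A - {v, j}) * e k v = - (e k j * tauE (A - {j}))" if "j \<in> A - {v}" for j
  proof -
    have "e v j * tauE (A - {v, j}) * e k v = tauE (A - {v, j}) * (e v j * e k v)" by (simp add: mult_ac)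
    also have "\<dots> = tauE (A - {v, j}) * (- (e v v * e k j))" by (simp only: e_rel[of v j k v])
    also have "\<dots> = - (e k j * (x v * tauE (A - {v, j})))" by (simp add: x_def mult_ac)
    also have "x v * tauE (A - {v, j}) = tauE (A - {j})"
    proof -
      have eq: "A - {v, j} = (A - {j}) - {v}" by auto
      show ?thesis unfolding eq by (rule tau_split[symmetric]) (use that assms in auto)
    qed
    finally show ?thesis .
  qed
  have z: "e i j * tauE (A - {i, j}) * e k v = 0" if "i \<in> A - {v}" "j \<in> A - {i}" for i j
  proof (cases "j = v")
    case True thus ?thesis by (metis mult.left_commute mult.commute e_same2 mult_zero_right)
  next
    case False hence "v \<in> A - {i, j}" using assms that by auto
    hence "tauE (A - {i, j}) * e k v = 0" using assms by (intro tau_e2) auto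
    thus ?thesis by (simp add: mult.assoc)
  qed
  have 2: "(\<Sum>i\<in>A. \<Sum>j\<in>A - {i}. e i j * tauE (A - {i, j}) * e k v) = (\<Sum>j\<in>A - {v}. - (e k j * tauE (A - {j})))"
  proof -
    have "(\<Sum>i\<in>A - {v}. \<Sum>j\<in>A - {i}. e i j * tauE (A - {i, j}) * e k v) = 0"
      by (intro sum.neutral ballI) (simp add: z)
    hence "(\<Sum>i\<in>A. \<Sum>j\<in>A - {i}. e i j * tauE (A - {i, j}) * e k v) = (\<Sum>j\<in>A - {v}. e v j * tauE (A - {v, j}) * e k v)"
      using assms by (simp add: sum.remove)
    also have "\<dots> = (\<Sum>j\<in>A - {v}. - (e k j * tauE (A - {j})))" by (rule sum.cong) (simp_all add: t)
    finally show ?thesis .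
  qed
  have "Sf A * e k v = tauE (A - {v}) * e k v + (\<Sum>j\<in>A - {v}. e k j * tauE (A - {j}))"
    unfolding Sf_def left_diff_distrib sum_distrib_right 1 2 by (simp add: sum_negf)
  also have "\<dots> = (\<Sum>j\<in>A. e k j * tauE (A - {j}))" using assms by (simp add: sum.remove mult.commute)
  finally show ?thesis .
qed

lemma c4:
  assumes "finite A" "v \<in> A"
  shows "Sf A * e v k = (\<Sum>i\<in>A. e i k * tauE (A - {i}))"
proof -
  have fA: "finite (A - X)" for X using assms by auto
  have 1: "(\<Sum>i\<in>A. tauE (A - {i}) * e v k) = tauE (A - {v}) * e v k"
  proof -
    have "(\<Sum>i\<in>A - {v}. tauE (A - {i}) * e v k) = 0"
      using assms by (intro sum.neutral ballI tau_e1) auto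
    thus ?thesis using assms by (simp add: sum.remove)
  qed
  have t: "e i v * tauE (A - {i, v}) * e v k = - (e i k * tauE (A - {i}))" if "i \<in> A - {v}" for i
  proof -
    have "e i v * tauE (A - {i, v}) * e v k = tauE (A - {i, v}) * (e i v * e v k)" by (simp add: mult_ac)
    also have "\<dots> = tauE (A - {i, v}) * (- (e i k * e v v))" by (simp only: e_rel[of i v v k])
    also have "\<dots> = - (e i k * (x v * tauE (A - {i, v})))" by (simp add: x_def mult_ac)
    also have "x v * tauE (A - {i, v}) = tauE (A - {i})"
    proof -
      have eq: "A - {i, v} = (A - {i}) - {v}" by auto
      show ?thesis unfolding eq by (rule tau_split[symmetric]) (use that assms in auto)
    qed
    finally show ?thesis .
  qed
  have z: "e i j * tauE (A - {i, j}) * e v k = 0" if "i \<in> A - {v}" "j \<in> A - {i}" "j \<noteq> v" for i j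
  proof -
    have "v \<in> A - {i, j}" using assms that by auto
    hence "tauE (A - {i, j}) * e v k = 0" using assms by (intro tau_e1) auto
    thus ?thesis by (simp add: mult.assoc)
  qed
  have z2: "e v j * tauE (A - {v, j}) * e v k = 0" for j
    by (metis mult.left_commute mult.commute e_same1 mult_zero_right)
  have 2: "(\<Sum>i\<in>A. \<Sum>j\<in>A - {i}. e i j * tauE (A - {i, j}) * e v k) = (\<Sum>i\<in>A - {v}. - (e i k * tauE (A - {i})))"
  proof -
    have "(\<Sum>i\<in>A. \<Sum>j\<in>A - {i}. e i j * tauE (A - {i, j}) * e v k)
        = (\<Sum>j\<in>A - {v}. e v j * tauE (A - {v, j}) * e v k) + (\<Sum>i\<in>A - {v}. \<Sum>j\<in>A - {i}. e i j * tauE (A - {i, j}) * e v k)"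
      using assms by (simp add: sum.remove)
    also have "(\<Sum>j\<in>A - {v}. e v j * tauE (A - {v, j}) * e v k) = 0"
      by (intro sum.neutral ballI) (simp add: z2)
    also have "(\<Sum>i\<in>A - {v}. \<Sum>j\<in>A - {i}. e i j * tauE (A - {i, j}) * e v k) = (\<Sum>i\<in>A - {v}. - (e i k * tauE (A - {i})))"
    proof (rule sum.cong[OF refl])
      fix i assume i: "i \<in> A - {v}"
      have "(\<Sum>j\<in>A - {i}. e i j * tauE (A - {i, j}) * e v k) = e i v * tauE (A - {i, v}) * e v k + (\<Sum>j\<in>A - {i} - {v}. e i j * tauE (A - {i, j}) * e v k)"
        using i assms by (subst sum.remove[of _ v]) auto
      also have "(\<Sum>j\<in>A - {i} - {v}. e i j * tauE (A - {i, j}) * e v k) = 0"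
        using i by (intro sum.neutral ballI z) auto
      finally show "(\<Sum>j\<in>A - {i}. e i j * tauE (A - {i, j}) * e v k) = - (e i k * tauE (A - {i}))"
        using t[OF i] by simp
    qed
    finally show ?thesis by simp
  qed
  have "Sf A * e v k = tauE (A - {v}) * e v k + (\<Sum>i\<in>A - {v}. e i k * tauE (A - {i}))"
    unfolding Sf_def left_diff_distrib sum_distrib_right 1 2 by (simp add: sum_negf)
  also have "\<dots> = (\<Sum>i\<in>A. e i k * tauE (A - {i}))" using assms by (simp add: sum.remove mult.commute)
  finally show ?thesis .
qed

lemma c5:
  assumes "finite A" "k \<notin> A"
  shows "Sf (insert k A) = tauE A + (\<Sum>i\<in>A. tauE (insert k A - {i}))
     - ((\<Sum>i\<in>A. \<Sum>j\<in>A - {i}. e i j * tauE (insert k A - {i, j}))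
        + (\<Sum>j\<in>A. e k j * tauE (A - {j})) + (\<Sum>i\<in>A. e i k * tauE (A - {i})))"
proof -
  have s1: "(\<Sum>i\<in>insert k A. tauE (insert k A - {i})) = tauE A + (\<Sum>i\<in>A. tauE (insert k A - {i}))"
    using assms by (simp add: insert_Diff_if)
  have s2: "(\<Sum>i\<in>insert k A. \<Sum>j\<in>insert k A - {i}. e i j * tauE (insert k A - {i, j}))
      = (\<Sum>j\<in>A. e k j * tauE (A - {j})) + ((\<Sum>i\<in>A. \<Sum>j\<in>A - {i}. e i j * tauE (insert k A - {i, j})) + (\<Sum>i\<in>A. e i k * tauE (A - {i})))"
  proof -
    have "(\<Sum>i\<in>insert k A. \<Sum>j\<in>insert k A - {i}. e i j * tauE (insert k A - {i, j}))
       = (\<Sum>j\<in>insert k A - {k}. e k j * tauE (insert k A - {k, j})) + (\<Sum>i\<in>A. \<Sum>j\<in>insert k A - {i}. e i j * tauE (insert k A - {i, j}))"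
      using assms by simp
    also have "insert k A - {k} = A" using assms by auto
    also have "(\<Sum>j\<in>A. e k j * tauE (insert k A - {k, j})) = (\<Sum>j\<in>A. e k j * tauE (A - {j}))"
    proof (rule sum.cong[OF refl])
      fix j assume "j \<in> A" hence "insert k A - {k, j} = A - {j}" using assms by auto
      thus "e k j * tauE (insert k A - {k, j}) = e k j * tauE (A - {j})" by simp
    qed
    also have "(\<Sum>i\<in>A. \<Sum>j\<in>insert k A - {i}. e i j * tauE (insert k A - {i, j}))
       = (\<Sum>i\<in>A. (\<Sum>j\<in>A - {i}. e i j * tauE (insert k A - {i, j})) + e i k * tauE (A - {i}))"
    proof (rule sum.cong[OF refl])
      fix i assume i: "i \<in> A"
      have "insert k A - {i} = insert k (A - {i})" using i assms by auto
      moreover have "insert k A - {i, k} = A - {i}" using i assms by auto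
      ultimately show "(\<Sum>j\<in>insert k A - {i}. e i j * tauE (insert k A - {i, j})) = (\<Sum>j\<in>A - {i}. e i j * tauE (insert k A - {i, j})) + e i k * tauE (A - {i})"
        using assms by (simp add: add.commute)
    qed
    finally show ?thesis by (simp add: sum.distrib)
  qed
  show ?thesis unfolding Sf_def s1 s2 by (simp add: algebra_simps)
qed

lemma Sf_step:
  assumes "finite A" "v \<in> A" "k \<notin> A"
  shows "Sf (insert k A) = Sf A * y v k"
proof -
  have "Sf A * y v k = Sf A * x k + Sf A * x v - Sf A * e k v - Sf A * e v k"
    by (simp add: y_def algebra_simps)
  also have "\<dots> = Sf (insert k A)"
    unfolding c1[OF assms(1,3)] c2[OF assms(1,2)] c3[OF assms(1,2)] c4[OF assms(1,2)] c5[OF assms(1,3)]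
    by (simp add: algebra_simps)
  finally show ?thesis by simp
qed

lemma Sf_single: "Sf {v} = 1"
  by (simp add: Sf_def tau_empty)

lemma Sf_Y: "finite A \<Longrightarrow> v \<in> A \<Longrightarrow> Sf A = Y v A"
proof -
  have "finite B \<Longrightarrow> v \<notin> B \<Longrightarrow> Sf (insert v B) = (\<Prod>i\<in>B. y v i)" for B
  proof (induction B rule: finite_induct)
    case empty thus ?case by (simp add: Sf_single)
  next
    case (insert k B)
    have "Sf (insert v (insert k B)) = Sf (insert k (insert v B))" by (simp add: insert_commute)
    also have "\<dots> = Sf (insert v B) * y v k" using insert by (intro Sf_step) auto
    finally show ?case using insert by (simp add: mult.commute)
  qed
  moreover assume "finite A" "v \<in> A"
  ultimately show ?thesis
    unfolding Y_def by (metis finite_Diff insert_Diff Diff_iff singletonI)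
qed

lemma Fp_Y: "finite A \<Longrightarrow> v \<in> A \<Longrightarrow> Fp lam A = sc (lam * (1 - of_nat (card A))) * tauE A + Y v A"
  by (simp add: Fp_def Sf_Y)

lemma x_sq2: "x i * (x i * z) = 0" by (simp add: mult.assoc[symmetric] x_sq)

lemma x_y: "x v * y v i = x v * x i"
  by (simp add: y_def algebra_simps x_sq x_e1 x_e2)

lemma x_prod_y: "finite S \<Longrightarrow> x v * (\<Prod>i\<in>S. y v i) = x v * (\<Prod>i\<in>S. x i)"
proof (induction S rule: finite_induct)
  case empty thus ?case by simp
next
  case (insert k S)
  have "x v * (\<Prod>i\<in>insert k S. y v i) = (x v * y v k) * (\<Prod>i\<in>S. y v i)"
    using insert by (simp add: mult_ac)
  also have "\<dots> = x k * (x v * (\<Prod>i\<in>S. y v i))" by (simp add: x_y mult_ac)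
  also have "\<dots> = x v * (\<Prod>i\<in>insert k S. x i)" using insert by (simp add: mult_ac)
  finally show ?case .
qed

lemma x_Y: "finite B \<Longrightarrow> x v * Y v B = x v * tauE (B - {v})"
  by (simp add: Y_def tauE_def x_prod_y)

lemma sq4:
  fixes a b c d :: "'a::comm_ring_1"
  assumes "a * a = 0" "b * b = 0" "c * c = 0" "d * d = 0" "a * c = 0" "a * d = 0" "b * c = 0" "b * d = 0"
    "c * d = - (a * b)"
  shows "(a + b - c - d) * (a + b - c - d) = 0"
proof -
  have "(a + b - c - d) * (a + b - c - d) = a*a + b*b + c*c + d*d + 2*(a*b) - 2*(a*c) - 2*(a*d) - 2*(b*c) - 2*(b*d) + 2*(c*d)"
    by (simp add: algebra_simps)
  thus ?thesis using assms by simp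
qed

lemma y_sq: "y v i * y v i = 0"
  unfolding y_def
  by (rule sq4) (simp_all add: x_sq x_e1 x_e2 e_same1 e_same2 e_rel[of i v v i] x_def)

lemma y_sq2: "y v i * (y v i * z) = 0" by (simp add: mult.assoc[symmetric] y_sq)

lemma tau_union: "finite A \<Longrightarrow> finite B \<Longrightarrow> A \<inter> B = {} \<Longrightarrow> tauE (A \<union> B) = tauE A * tauE B"
  by (simp add: tauE_def prod.union_disjoint)

lemma tau_Y:
  assumes "finite A" "finite B" "A \<inter> B = {v}"
  shows "tauE A * Y v B = tauE (A \<union> B)"
proof -
  have v: "v \<in> A" "v \<in> B" using assms by auto
  have "tauE A * Y v B = tauE (A - {v}) * (x v * Y v B)"
    using assms v by (simp add: tau_split[of A v] mult_ac)
  also have "\<dots> = tauE (A - {v}) * tauE B"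
    using assms v by (simp add: x_Y tau_split[of B v, symmetric])
  also have "\<dots> = tauE ((A - {v}) \<union> B)"
    using assms by (subst tau_union) auto
  also have "(A - {v}) \<union> B = A \<union> B" using v by auto
  finally show ?thesis .
qed

lemma Fp_union:
  fixes A B :: "'v::linorder set"
  assumes "finite A" "finite B" "A \<inter> B = {v}"
  shows "Fp lam A * Fp lam B = Fp lam (A \<union> B)"
proof -
  have v: "v \<in> A" "v \<in> B" using assms by auto
  define a where "a = (sc (lam * (1 - of_nat (card A))) :: 'v E)"
  define b where "b = (sc (lam * (1 - of_nat (card B))) :: 'v E)"
  have tt: "tauE A * tauE B = 0"
    using assms v by (simp add: tau_split[of A v] tau_split[of B v] mult_ac x_sq x_sq2)
  have ty: "tauE A * Y v B = tauE (A \<union> B)" by (rule tau_Y[OF assms])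
  have yt: "Y v A * tauE B = tauE (A \<union> B)"
    using tau_Y[of B A v] assms by (simp add: Int_commute Un_commute mult.commute)
  have yy: "Y v A * Y v B = Y v (A \<union> B)"
  proof -
    have "(A \<union> B) - {v} = (A - {v}) \<union> (B - {v})" by auto
    moreover have "(A - {v}) \<inter> (B - {v}) = {}" using assms by auto
    ultimately show ?thesis using assms by (simp add: Y_def prod.union_disjoint)
  qed
  have cd: "card A + card B = card (A \<union> B) + 1"
    using card_Un_Int[OF assms(1,2)] assms(3) by simp
  have ab: "a + b = sc (lam * (1 - of_nat (card (A \<union> B))))"
  proof -
    have "lam * (1 - of_nat (card A)) + lam * (1 - of_nat (card B)) = lam * (1 - of_nat (card (A \<union> B)))"
    proof -
      have "(of_nat (card A) :: complex) + of_nat (card B) = of_nat (card (A \<union> B)) + 1"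
        using cd by (metis of_nat_1 of_nat_add)
      hence "lam * (of_nat (card A) + of_nat (card B)) = lam * (of_nat (card (A \<union> B)) + 1)" by simp
      thus ?thesis by (simp add: algebra_simps)
    qed
    thus ?thesis unfolding a_def b_def by (simp flip: sc_add)
  qed
  have "Fp lam A * Fp lam B = (a * tauE A + Y v A) * (b * tauE B + Y v B)"
    using assms v by (simp add: Fp_Y[of A v] Fp_Y[of B v] a_def b_def)
  also have "\<dots> = a * b * (tauE A * tauE B) + a * (tauE A * Y v B) + b * (Y v A * tauE B) + Y v A * Y v B"
    by (simp add: algebra_simps)
  also have "\<dots> = (a + b) * tauE (A \<union> B) + Y v (A \<union> B)"
    unfolding tt ty yt yy by (simp add: algebra_simps)
  also have "\<dots> = Fp lam (A \<union> B)"
    using assms v by (simp add: ab Fp_Y[of "A \<union> B" v])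
  finally show ?thesis .
qed

lemma Fp_zero:
  fixes A B :: "'v::linorder set"
  assumes "finite A" "finite B" "u \<noteq> v" "u \<in> A" "u \<in> B" "v \<in> A" "v \<in> B"
  shows "Fp lam A * Fp lam B = 0"
proof -
  define a where "a = (sc (lam * (1 - of_nat (card A))) :: 'v E)"
  define b where "b = (sc (lam * (1 - of_nat (card B))) :: 'v E)"
  have tt: "tauE A * tauE B = 0"
    using assms by (simp add: tau_split[of A v] tau_split[of B v] mult_ac x_sq x_sq2)
  have ty0: "tauE A' * Y v B' = 0" if "finite A'" "finite B'" "u \<in> A'" "u \<in> B'" "v \<in> A'" for A' B'
  proof -
    have "tauE A' * Y v B' = tauE (A' - {v}) * (x v * Y v B')"
      using that by (simp add: tau_split[of A' v] mult_ac)
    also have "\<dots> = tauE (A' - {v}) * (x v * tauE (B' - {v}))" using that by (simp add: x_Y)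
    also have "\<dots> = (x u * x u) * (tauE (A' - {v} - {u}) * x v * tauE (B' - {v} - {u}))"
      using that assms(3) by (simp add: tau_split[of "A' - {v}" u] tau_split[of "B' - {v}" u] mult_ac)
    also have "\<dots> = 0" by (simp add: x_sq)
    finally show ?thesis .
  qed
  have ty: "tauE A * Y v B = 0" using assms by (intro ty0) auto
  have yt: "Y v A * tauE B = 0" using assms ty0[of B A] by (simp add: mult.commute)
  have yy: "Y v A * Y v B = 0"
  proof -
    have "Y v A = y v u * (\<Prod>i\<in>A - {v} - {u}. y v i)" "Y v B = y v u * (\<Prod>i\<in>B - {v} - {u}. y v i)"
      using assms by (simp_all add: Y_def prod.remove)
    thus ?thesis by (simp add: mult_ac y_sq2)
  qed
  have "Fp lam A * Fp lam B = (a * tauE A + Y v A) * (b * tauE B + Y v B)"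
    using assms by (simp add: Fp_Y[of A v] Fp_Y[of B v] a_def b_def)
  also have "\<dots> = a * b * (tauE A * tauE B) + a * (tauE A * Y v B) + b * (Y v A * tauE B) + Y v A * Y v B"
    by (simp add: algebra_simps)
  also have "\<dots> = 0" by (simp add: tt ty yt yy)
  finally show ?thesis .
qed

lemma Fp_single: "Fp lam {i} = 1"
  by (simp add: Fp_def Sf_single sc_zero)

lemma Fp_x:
  assumes "finite T" "i \<in> T"
  shows "Fp lam T * x i = tauE T"
proof -
  have "Fp lam T * x i = sc (lam * (1 - of_nat (card T))) * (tauE T * x i) + x i * Y i T"
    using assms by (simp add: Fp_Y[of T i] algebra_simps)
  also have "\<dots> = x i * tauE (T - {i})" using assms by (simp add: tau_x x_Y)
  also have "\<dots> = tauE T" using assms by (simp add: tau_split[of T i])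
  finally show ?thesis .
qed

lemma Fp_prod_aux:
  assumes "finite T" "S \<subseteq> T"
  shows "Fp lam T * (\<Prod>i\<in>S. 1 + sc lam * x i) = Fp lam T + sc (lam * of_nat (card S)) * tauE T"
proof -
  have "finite S" using assms finite_subset by auto
  thus ?thesis using assms(2)
  proof (induction S rule: finite_induct)
    case empty thus ?case by (simp add: sc_zero)
  next
    case (insert k S)
    have k: "k \<in> T" using insert by auto
    have "Fp lam T * (\<Prod>i\<in>insert k S. 1 + sc lam * x i) = (Fp lam T * (\<Prod>i\<in>S. 1 + sc lam * x i)) * (1 + sc lam * x k)"
      using insert(1,2) by (simp add: mult_ac)
    also have "\<dots> = (Fp lam T + sc (lam * of_nat (card S)) * tauE T) * (1 + sc lam * x k)"
    proof -
      have ih: "Fp lam T * (\<Prod>i\<in>S. 1 + sc lam * x i) = Fp lam T + sc (lam * of_nat (card S)) * tauE T"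
        using insert by auto
      show ?thesis by (simp only: ih)
    qed
    also have "\<dots> = Fp lam T + sc (lam * of_nat (card S)) * tauE T + sc lam * (Fp lam T * x k) + sc (lam * of_nat (card S)) * sc lam * (tauE T * x k)"
      by (simp add: algebra_simps)
    also have "\<dots> = Fp lam T + sc (lam * of_nat (card S)) * tauE T + sc lam * tauE T + sc (lam * of_nat (card S)) * sc lam * 0"
      by (simp only: Fp_x[OF assms(1) k] tau_x[OF assms(1) k])
    also have "\<dots> = Fp lam T + (sc (lam * of_nat (card S)) + sc lam) * tauE T"
      by (simp add: algebra_simps)
    also have "sc (lam * of_nat (card S)) + sc lam = sc (lam * of_nat (card (insert k S)))"
      using insert by (simp add: sc_add[symmetric] algebra_simps)
    finally show ?case .
  qed
qed

lemma Fp_prod: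
  assumes "finite T" "v \<in> T"
  shows "Fp lam T * (\<Prod>i\<in>T. 1 + sc lam * x i) = sc lam * tauE T + Y v T"
proof -
  have "Fp lam T * (\<Prod>i\<in>T. 1 + sc lam * x i) = Fp lam T + sc (lam * of_nat (card T)) * tauE T"
    using assms by (intro Fp_prod_aux) auto
  also have "\<dots> = (sc (lam * (1 - of_nat (card T))) + sc (lam * of_nat (card T))) * tauE T + Y v T"
    using assms by (simp add: Fp_Y[of T v] algebra_simps)
  also have "sc (lam * (1 - of_nat (card T))) + sc (lam * of_nat (card T)) = sc lam"
    by (simp add: sc_add[symmetric] algebra_simps)
  finally show ?thesis .
qed

definition supp_in :: "('v \<times> bool) set \<Rightarrow> 'v::linorder E \<Rightarrow> bool" where
  "supp_in X a \<longleftrightarrow> (\<forall>U. coef a U \<noteq> 0 \<longrightarrow> U \<subseteq> X)"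
definition lowdeg :: "nat \<Rightarrow> 'v::linorder E \<Rightarrow> bool" where
  "lowdeg d a \<longleftrightarrow> (\<forall>U. coef a U \<noteq> 0 \<longrightarrow> d \<le> card U)"
definition homog :: "nat \<Rightarrow> 'v::linorder E \<Rightarrow> bool" where
  "homog d a \<longleftrightarrow> (\<forall>U. coef a U \<noteq> 0 \<longrightarrow> card U = d)"

lemma coef_times_nz:
  assumes "coef (a * b) U \<noteq> 0"
  obtains S where "S \<subseteq> U" "finite U" "coef a S \<noteq> 0" "coef b (U - S) \<noteq> 0"
proof -
  have fin: "finite U" using assms coef_finite by blast
  from assms obtain S where "S \<in> Pow U" "gsign S (U - S) * coef a S * coef b (U - S) \<noteq> 0"
    unfolding coef_times gmul_def by (meson sum.neutral)
  thus ?thesis using that fin by auto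
qed

lemma card_split: "finite U \<Longrightarrow> S \<subseteq> U \<Longrightarrow> card U = card S + card (U - S)"
  by (metis card_Diff_subset card_mono finite_subset le_add_diff_inverse)

lemma supp_times:
  assumes "supp_in X a" "supp_in X2 b" shows "supp_in (X \<union> X2) (a * b)"
  unfolding supp_in_def
proof (intro allI impI)
  fix U assume "coef (a * b) U \<noteq> 0"
  then obtain S where "S \<subseteq> U" "coef a S \<noteq> 0" "coef b (U - S) \<noteq> 0" by (rule coef_times_nz)
  hence "S \<subseteq> X" "U - S \<subseteq> X2" using assms unfolding supp_in_def by auto
  thus "U \<subseteq> X \<union> X2" by blast
qed

lemma homog_times:
  assumes "homog m a" "homog n b" shows "homog (m + n) (a * b)"
  unfolding homog_def
proof (intro allI impI)
  fix U assume "coef (a * b) U \<noteq> 0"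
  then obtain S where "S \<subseteq> U" "finite U" "coef a S \<noteq> 0" "coef b (U - S) \<noteq> 0" by (rule coef_times_nz)
  moreover hence "card S = m" "card (U - S) = n" using assms unfolding homog_def by auto
  ultimately show "card U = m + n" using card_split by metis
qed

lemma lowdeg_times:
  assumes "lowdeg m a" "lowdeg n b" shows "lowdeg (m + n) (a * b)"
  unfolding lowdeg_def
proof (intro allI impI)
  fix U assume "coef (a * b) U \<noteq> 0"
  then obtain S where "S \<subseteq> U" "finite U" "coef a S \<noteq> 0" "coef b (U - S) \<noteq> 0" by (rule coef_times_nz)
  moreover hence "m \<le> card S" "n \<le> card (U - S)" using assms unfolding lowdeg_def by auto
  ultimately show "m + n \<le> card U" using card_split by (metis add_le_mono)
qed

lemma plus_nz: "coef (a + b) U \<noteq> 0 \<Longrightarrow> coef a U \<noteq> 0 \<or> coef b U \<noteq> 0"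
  by (auto simp: coef_plus gadd_def)

lemma supp_plus: "supp_in X a \<Longrightarrow> supp_in X b \<Longrightarrow> supp_in X (a + b)"
  unfolding supp_in_def using plus_nz by blast
lemma homog_plus: "homog d a \<Longrightarrow> homog d b \<Longrightarrow> homog d (a + b)"
  unfolding homog_def using plus_nz by blast
lemma lowdeg_plus: "lowdeg d a \<Longrightarrow> lowdeg d b \<Longrightarrow> lowdeg d (a + b)"
  unfolding lowdeg_def using plus_nz by blast

lemma supp_uminus: "supp_in X a \<Longrightarrow> supp_in X (- a)"
  unfolding supp_in_def coef_uminus by simp
lemma homog_uminus: "homog d a \<Longrightarrow> homog d (- a)"
  unfolding homog_def coef_uminus by simp
lemma supp_minus: "supp_in X a \<Longrightarrow> supp_in X b \<Longrightarrow> supp_in X (a - b)"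
  unfolding diff_conv_add_uminus by (intro supp_plus supp_uminus)
lemma homog_minus: "homog d a \<Longrightarrow> homog d b \<Longrightarrow> homog d (a - b)"
  unfolding diff_conv_add_uminus by (intro homog_plus homog_uminus)

lemma supp_sc: "supp_in X a \<Longrightarrow> supp_in X (sc c * a)"
  unfolding supp_in_def coef_sc_times gsmult_def by simp
lemma homog_sc: "homog d a \<Longrightarrow> homog d (sc c * a)"
  unfolding homog_def coef_sc_times gsmult_def by simp
lemma lowdeg_sc: "lowdeg d a \<Longrightarrow> lowdeg d (sc c * a)"
  unfolding lowdeg_def coef_sc_times gsmult_def by simp

lemma supp_one: "supp_in X 1"
  unfolding supp_in_def coef_one gone_def gscalar_def by auto
lemma homog_one: "homog 0 1"
  unfolding homog_def coef_one gone_def gscalar_def by auto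

lemma supp_mono: "supp_in X a \<Longrightarrow> X \<subseteq> X2 \<Longrightarrow> supp_in X2 a"
  unfolding supp_in_def by blast
lemma homog_lowdeg: "homog d a \<Longrightarrow> lowdeg d a"
  unfolding homog_def lowdeg_def by simp
lemma lowdeg_mono: "lowdeg d a \<Longrightarrow> d' \<le> d \<Longrightarrow> lowdeg d' a"
  unfolding lowdeg_def by force

lemma supp_prod: "finite I \<Longrightarrow> (\<And>i. i \<in> I \<Longrightarrow> supp_in X (f i)) \<Longrightarrow> supp_in X (\<Prod>i\<in>I. f i)"
proof (induction I rule: finite_induct)
  case empty thus ?case by (simp add: supp_one)
next
  case (insert k I)
  have "supp_in (X \<union> X) (f k * (\<Prod>i\<in>I. f i))" by (rule supp_times) (use insert in auto)
  thus ?case using insert by simp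
qed

lemma homog_prod: "finite I \<Longrightarrow> (\<And>i. i \<in> I \<Longrightarrow> homog d (f i)) \<Longrightarrow> homog (d * card I) (\<Prod>i\<in>I. f i)"
proof (induction I rule: finite_induct)
  case empty thus ?case by (simp add: homog_one)
next
  case (insert k I)
  hence "homog (d + d * card I) (f k * (\<Prod>i\<in>I. f i))" by (intro homog_times) auto
  thus ?case using insert by simp
qed

lemma lowdeg_power: "lowdeg d a \<Longrightarrow> lowdeg (n * d) (a ^ n)"
proof (induction n)
  case 0 thus ?case by (simp add: lowdeg_def)
next
  case (Suc n) thus ?case using lowdeg_times[of d a "n * d" "a ^ n"] by (simp add: add.commute)
qed

lemma lowdeg_sum: "finite I \<Longrightarrow> (\<And>i. i \<in> I \<Longrightarrow> lowdeg d (f i)) \<Longrightarrow> lowdeg d (\<Sum>i\<in>I. f i)"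
proof (induction I rule: finite_induct)
  case empty thus ?case by (simp add: lowdeg_def coef_zero)
next
  case (insert k I)
  have "lowdeg d (f k + (\<Sum>i\<in>I. f i))" by (rule lowdeg_plus) (use insert in auto)
  thus ?case using insert by simp
qed

lemma supp_sum: "finite I \<Longrightarrow> (\<And>i. i \<in> I \<Longrightarrow> supp_in X (f i)) \<Longrightarrow> supp_in X (\<Sum>i\<in>I. f i)"
proof (induction I rule: finite_induct)
  case empty thus ?case by (simp add: supp_in_def coef_zero)
next
  case (insert k I)
  have "supp_in X (f k + (\<Sum>i\<in>I. f i))" by (rule supp_plus) (use insert in auto)
  thus ?case using insert by simp
qed

lemma supp_power: "supp_in X a \<Longrightarrow> supp_in X (a ^ n)"
proof (induction n)
  case 0 thus ?case by (simp add: supp_one)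
next
  case (Suc n)
  have "supp_in (X \<union> X) (a * a ^ n)" by (rule supp_times) (use Suc in auto)
  thus ?case by simp
qed

lemma E_eqI: "(\<And>U. coef a U = coef b U) \<Longrightarrow> a = b"
  by (metis coef_inject ext)

lemma zero_by_degree:
  assumes "supp_in X a" "lowdeg d a" "finite X" "card X < d"
  shows "a = 0"
proof (rule E_eqI)
  fix U
  show "coef a U = coef 0 U"
  proof (rule ccontr)
    assume "coef a U \<noteq> coef 0 U"
    hence "coef a U \<noteq> 0" by (simp add: coef_zero)
    hence "U \<subseteq> X" "d \<le> card U" using assms unfolding supp_in_def lowdeg_def by auto
    moreover have "card U \<le> card X" using assms(3) \<open>U \<subseteq> X\<close> by (rule card_mono)
    ultimately show False using assms(4) by linarith
  qed
qed

lemma coef_e_val: "coef (e i j) U = (if U = {(i, True), (j, False)} \<and> (i, True) \<noteq> (j, False) then (if (j, False) < (i, True) then -1 else 1) else 0)"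
  by (simp add: coef_e psi_def psibar_def gmul_ggen)

lemma supp_e: "supp_in ({i, j} \<times> UNIV) (e i j)"
  unfolding supp_in_def coef_e_val by auto

lemma homog_e: "homog 2 (e i j)"
  unfolding homog_def coef_e_val by auto

lemma supp_x: "supp_in ({i} \<times> UNIV) (x i)"
  using supp_e[of i i] by (simp add: x_def)

lemma homog_x: "homog 2 (x i)" by (simp add: x_def homog_e)

lemma coef_x: "coef (x i) ({i} \<times> UNIV) = -1"
proof -
  have "{i} \<times> (UNIV :: bool set) = {(i, True), (i, False)}" by auto
  thus ?thesis by (simp add: x_def coef_e_val)
qed

lemma homog_y: "homog 2 (y v i)"
  by (simp add: y_def homog_x homog_e homog_plus homog_minus)

lemma supp_y: "supp_in ({i, v} \<times> UNIV) (y v i)"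
  unfolding y_def
  by (intro supp_minus supp_plus; rule supp_mono[OF supp_x] supp_mono[OF supp_e]) auto

lemma supp_tau: "finite T \<Longrightarrow> supp_in (T \<times> UNIV) (tauE T)"
  unfolding tauE_def by (intro supp_prod) (auto intro: supp_mono[OF supp_x])

lemma supp_Y: "finite T \<Longrightarrow> v \<in> T \<Longrightarrow> supp_in (T \<times> UNIV) (Y v T)"
  unfolding Y_def by (intro supp_prod) (auto intro: supp_mono[OF supp_y])

lemma homog_Y: "finite T \<Longrightarrow> homog (2 * card (T - {v})) (Y v T)"
  unfolding Y_def by (intro homog_prod homog_y) auto

lemma homog_tau: "finite T \<Longrightarrow> homog (2 * card T) (tauE T)"
  unfolding tauE_def by (intro homog_prod homog_x) auto

lemma gsign_blocks:
  fixes A B :: "'a::linorder set"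
  assumes "A \<inter> B = {}" "finite A" "finite B"
  shows "gsign (A \<times> (UNIV :: bool set)) (B \<times> UNIV) = 1"
proof -
  define I where "I = {(a, b). a \<in> A \<and> b \<in> B \<and> b < a}"
  define h :: "('a \<times> 'a) \<times> (bool \<times> bool) \<Rightarrow> ('a \<times> bool) \<times> ('a \<times> bool)"
    where "h = (\<lambda>((a, b), (s, t)). ((a, s), (b, t)))"
  have "invs (A \<times> UNIV) (B \<times> UNIV) = h ` (I \<times> (UNIV :: (bool \<times> bool) set))"
  proof (rule set_eqI)
    fix p
    show "p \<in> invs (A \<times> UNIV) (B \<times> UNIV) \<longleftrightarrow> p \<in> h ` (I \<times> (UNIV :: (bool \<times> bool) set))"
    proof
      assume "p \<in> invs (A \<times> UNIV) (B \<times> UNIV)"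
      then obtain a s b t where p: "p = ((a, s), (b, t))" "a \<in> A" "b \<in> B" "(b, t) < (a, s)"
        unfolding invs_def by auto
      have "a \<noteq> b" using p assms(1) by auto
      hence "b < a" using p(4) by (auto simp: less_prod_def)
      hence "((a, b), (s, t)) \<in> I \<times> UNIV" using p by (auto simp: I_def)
      thus "p \<in> h ` (I \<times> (UNIV :: (bool \<times> bool) set))" unfolding p(1)
        by (rule image_eqI[rotated]) (simp add: h_def)
    next
      assume "p \<in> h ` (I \<times> (UNIV :: (bool \<times> bool) set))"
      then obtain a b s t where "p = ((a, s), (b, t))" "a \<in> A" "b \<in> B" "b < a"
        unfolding h_def I_def by auto
      thus "p \<in> invs (A \<times> UNIV) (B \<times> UNIV)" by (auto simp: invs_def less_prod_def)
    qed
  qed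
  moreover have "inj_on h (I \<times> (UNIV :: (bool \<times> bool) set))" unfolding h_def inj_on_def by auto
  moreover have c4: "card (UNIV :: (bool \<times> bool) set) = 4"
    by (simp add: UNIV_Times_UNIV[symmetric] card_cartesian_product card_UNIV_bool del: UNIV_Times_UNIV)
  ultimately have "card (invs (A \<times> UNIV) (B \<times> UNIV)) = card I * 4"
    by (simp add: card_image card_cartesian_product)
  thus ?thesis by (simp add: gsign_invs)
qed

lemma top2:
  assumes "supp_in (A \<times> UNIV) a" "supp_in (B \<times> UNIV) b" "A \<inter> B = {}" "finite A" "finite B"
  shows "coef (a * b) ((A \<union> B) \<times> UNIV) = coef a (A \<times> UNIV) * coef b (B \<times> UNIV)"
proof -
  let ?U = "(A \<union> B) \<times> (UNIV :: bool set)"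
  have finU: "finite ?U" using assms by auto
  have z: "gsign S (?U - S) * coef a S * coef b (?U - S) = 0" if "S \<in> Pow ?U" "S \<noteq> A \<times> UNIV" for S
  proof (rule ccontr)
    assume "gsign S (?U - S) * coef a S * coef b (?U - S) \<noteq> 0"
    hence "S \<subseteq> A \<times> UNIV" "?U - S \<subseteq> B \<times> UNIV" using assms(1,2) unfolding supp_in_def by auto
    hence "S = A \<times> UNIV" using assms(3) by blast
    thus False using that by simp
  qed
  have "coef (a * b) ?U = (\<Sum>S\<in>Pow ?U. gsign S (?U - S) * coef a S * coef b (?U - S))"
    by (simp add: coef_times gmul_def)
  also have "\<dots> = gsign (A \<times> UNIV) (?U - A \<times> UNIV) * coef a (A \<times> UNIV) * coef b (?U - A \<times> UNIV)
      + (\<Sum>S\<in>Pow ?U - {A \<times> UNIV}. gsign S (?U - S) * coef a S * coef b (?U - S))"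
    by (rule sum.remove) (use finU in auto)
  also have "(\<Sum>S\<in>Pow ?U - {A \<times> UNIV}. gsign S (?U - S) * coef a S * coef b (?U - S)) = 0"
    by (rule sum.neutral) (use z in blast)
  also have "?U - A \<times> UNIV = B \<times> UNIV" using assms(3) by auto
  finally show ?thesis using gsign_blocks[OF assms(3-5)] by simp
qed

lemma top_prod:
  assumes "finite P" "\<forall>T\<in>P. finite T" "\<forall>A\<in>P. \<forall>B\<in>P. A \<noteq> B \<longrightarrow> A \<inter> B = {}"
    "\<And>T. T \<in> P \<Longrightarrow> supp_in (T \<times> UNIV) (g T)"
  shows "coef (\<Prod>T\<in>P. g T) (\<Union>P \<times> UNIV) = (\<Prod>T\<in>P. coef (g T) (T \<times> UNIV))
     \<and> supp_in (\<Union>P \<times> UNIV) (\<Prod>T\<in>P. g T)"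
  using assms
proof (induction P rule: finite_induct)
  case empty
  have "coef 1 {} = 1" by (simp add: coef_one gone_def gscalar_def)
  thus ?case by (simp add: supp_one)
next
  case (insert T P)
  have IH: "coef (\<Prod>T\<in>P. g T) (\<Union>P \<times> UNIV) = (\<Prod>T\<in>P. coef (g T) (T \<times> UNIV))"
    "supp_in (\<Union>P \<times> UNIV) (\<Prod>T\<in>P. g T)" using insert by auto
  have d: "T \<inter> \<Union>P = {}" using insert by auto
  have fT: "finite T" "finite (\<Union>P)" using insert by auto
  have sT: "supp_in (T \<times> UNIV) (g T)" using insert by auto
  have "coef (\<Prod>T\<in>insert T P. g T) (\<Union>(insert T P) \<times> UNIV) = coef (g T * (\<Prod>T\<in>P. g T)) ((T \<union> \<Union>P) \<times> UNIV)"
    using insert by simp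
  also have "\<dots> = coef (g T) (T \<times> UNIV) * coef (\<Prod>T\<in>P. g T) (\<Union>P \<times> UNIV)"
    by (rule top2[OF sT IH(2) d fT])
  finally have 1: "coef (\<Prod>T\<in>insert T P. g T) (\<Union>(insert T P) \<times> UNIV) = (\<Prod>T\<in>insert T P. coef (g T) (T \<times> UNIV))"
    using insert IH by simp
  have "supp_in ((T \<times> UNIV) \<union> (\<Union>P \<times> UNIV)) (g T * (\<Prod>T\<in>P. g T))"
    by (rule supp_times[OF sT IH(2)])
  hence 2: "supp_in (\<Union>(insert T P) \<times> UNIV) (\<Prod>T\<in>insert T P. g T)"
    using insert by (simp add: Sigma_Un_distrib1)
  show ?case using 1 2 by blast
qed

lemma coef_tau: "finite T \<Longrightarrow> coef (tauE T) (T \<times> UNIV) = (-1) ^ card T"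
proof (induction T rule: finite_induct)
  case empty thus ?case by (simp add: tau_empty coef_one gone_def gscalar_def)
next
  case (insert k T)
  have "coef (tauE (insert k T)) (insert k T \<times> UNIV) = coef (x k * tauE T) (({k} \<union> T) \<times> UNIV)"
    using insert by (simp add: tau_insert)
  also have "\<dots> = coef (x k) ({k} \<times> UNIV) * coef (tauE T) (T \<times> UNIV)"
    using insert by (intro top2 supp_x supp_tau) auto
  finally show ?case using insert by (simp add: coef_x)
qed

lemma coef_Y_top: "finite T \<Longrightarrow> v \<in> T \<Longrightarrow> coef (Y v T) (T \<times> UNIV) = 0"
proof (rule ccontr)
  assume a: "finite T" "v \<in> T" "coef (Y v T) (T \<times> UNIV) \<noteq> 0"
  hence "card (T \<times> (UNIV :: bool set)) = 2 * card (T - {v})"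
    using homog_Y[OF a(1), of v] unfolding homog_def by blast
  moreover have "card (T \<times> (UNIV :: bool set)) = 2 * card T"
    by (simp add: card_cartesian_product card_UNIV_bool)
  moreover have "card (T - {v}) < card T" using a by (meson card_Diff1_less)
  ultimately show False by simp
qed

lemma coef_x_gen: "coef (x i) = gmul (psibar i) (psi i)" by (simp add: x_def coef_e)

lemma tau_coef: "finite A \<Longrightarrow> tau A = coef (tauE A)"
proof -
  assume fA: "finite A"
  have "tau A = coef (prod_list (map x (sorted_list_of_set A)))"
    unfolding tau_def glistprod_def coef_prod_list coef_x_gen by simp
  also have "prod_list (map x (sorted_list_of_set A)) = tauE A"
    unfolding tauE_def using fA
    by (metis prod.distinct_set_conv_list distinct_sorted_list_of_set set_sorted_list_of_set)
  finally show ?thesis .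
qed

lemma coef_Fp: "finite A \<Longrightarrow> fpoly lam A = coef (Fp lam A)"
proof -
  assume fA: "finite A"
  let ?P = "{(i, j). i \<in> A \<and> j \<in> A \<and> i \<noteq> j}"
  have P: "?P = Sigma A (\<lambda>i. A - {i})" by auto
  have s: "(\<Sum>i\<in>A. \<Sum>j\<in>A - {i}. e i j * tauE (A - {i, j})) = (\<Sum>p\<in>?P. case p of (i, j) \<Rightarrow> e i j * tauE (A - {i, j}))"
    unfolding P using fA by (subst sum.Sigma) auto
  have fin: "finite (A - X)" for X using fA by auto
  have "Fp lam A = sc (lam * (1 - of_nat (card A))) * tauE A + (\<Sum>i\<in>A. tauE (A - {i}))
      + sc (-1) * (\<Sum>p\<in>?P. case p of (i, j) \<Rightarrow> e i j * tauE (A - {i, j}))"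
    unfolding Fp_def Sf_def s sc_neg1 by (simp add: algebra_simps)
  hence "coef (Fp lam A) = gadd (gadd (gsmult (lam * (1 - of_nat (card A))) (coef (tauE A)))
       (gsum (\<lambda>i. coef (tauE (A - {i}))) A))
       (gsmult (-1) (gsum (\<lambda>p. coef (case p of (i, j) \<Rightarrow> e i j * tauE (A - {i, j}))) ?P))"
    by (simp add: coef_plus coef_sc_times coef_sum)
  also have "\<dots> = fpoly lam A"
    unfolding fpoly_def using fA
    by (simp add: tau_coef fin gsum_def split_def coef_times coef_e)
  finally show ?thesis by simp
qed

definition cf :: "nat \<Rightarrow> 'v::linorder E" where "cf n = sc (1 / of_nat (fact n))"

definition expE :: "nat \<Rightarrow> 'v::linorder E \<Rightarrow> 'v E" where
  "expE N z = (\<Sum>n\<in>{0..N}. cf n * z ^ n)"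

lemma coef_expE: "gexp V (coef z) = coef (expE (2 * card V) z)"
  by (simp add: gexp_def expE_def cf_def coef_sum coef_sc_times coef_power)

section \<open>Exponential\<close>

lemma binom_sq0:
  fixes z y :: "'a::comm_ring_1"
  assumes "y * y = 0"
  shows "(z + y) ^ Suc n = z ^ Suc n + of_nat (Suc n) * (y * z ^ n)"
proof (induction n)
  case 0 thus ?case by simp
next
  case (Suc n)
  have yy: "y * (y * w) = 0" for w using assms by (simp add: mult.assoc[symmetric])
  have "(z + y) ^ Suc (Suc n) = (z + y) * (z ^ Suc n + of_nat (Suc n) * (y * z ^ n))"
    using Suc by simp
  also have "\<dots> = z ^ Suc (Suc n) + of_nat (Suc n) * (y * z ^ Suc n) + y * z ^ Suc n
       + of_nat (Suc n) * (y * (y * z ^ n))"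
    by (simp add: algebra_simps)
  also have "\<dots> = z ^ Suc (Suc n) + of_nat (Suc (Suc n)) * (y * z ^ Suc n)"
    by (simp add: yy algebra_simps)
  finally show ?case .
qed

lemma expE_Suc: "expE (Suc N) z = expE N z + cf (Suc N) * z ^ Suc N"
  by (simp add: expE_def atLeast0_atMost_Suc add.commute)

lemma cf_Suc: "cf (Suc N) * of_nat (Suc N) = cf N"
proof -
  have e: "(of_nat (fact (Suc N)) :: complex) = of_nat (Suc N) * of_nat (fact N)"
    by (metis fact_Suc of_nat_id of_nat_mult)
  have n1: "(of_nat (Suc N) :: complex) \<noteq> 0" by (simp only: of_nat_eq_0_iff)
  have n2: "(of_nat (fact N) :: complex) \<noteq> 0" by (simp only: of_nat_eq_0_iff) simp
  have "(1 / of_nat (fact (Suc N)) :: complex) * of_nat (Suc N) = 1 / of_nat (fact N)"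
    unfolding e using n1 n2 by (simp add: divide_simps)
  thus ?thesis unfolding cf_def by (metis sc_mult sc_of_nat)
qed

lemma expE_add_aux:
  fixes u z :: "'v::linorder E"
  assumes "u * u = 0"
  shows "expE N (z + u) = expE N z + u * (expE N z - cf N * z ^ N)"
proof (induction N)
  case 0 thus ?case by (simp add: expE_def cf_def sc_one)
next
  case (Suc N)
  have "expE (Suc N) (z + u) = expE N (z + u) + cf (Suc N) * (z + u) ^ Suc N"
    by (rule expE_Suc)
  also have "\<dots> = expE N z + u * (expE N z - cf N * z ^ N)
     + cf (Suc N) * (z ^ Suc N + of_nat (Suc N) * (u * z ^ N))"
    by (simp only: Suc binom_sq0[OF assms])
  also have "\<dots> = expE N z + cf (Suc N) * z ^ Suc N + u * expE N z
     + u * z ^ N * (cf (Suc N) * of_nat (Suc N) - cf N)"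
    by (simp add: algebra_simps)
  also have "\<dots> = expE (Suc N) z + u * expE N z"
    by (simp only: cf_Suc expE_Suc diff_self mult_zero_right add_0_right)
  also have "\<dots> = expE (Suc N) z + u * (expE (Suc N) z - cf (Suc N) * z ^ Suc N)"
    by (simp add: expE_Suc)
  finally show ?case .
qed

lemma expE_add:
  fixes u z :: "'v::linorder E"
  assumes "u * u = 0" "u * z ^ N = 0"
  shows "expE N (z + u) = expE N z * (1 + u)"
proof -
  have "u * (expE N z - cf N * z ^ N) = u * expE N z - cf N * (u * z ^ N)" by (simp add: algebra_simps)
  thus ?thesis using expE_add_aux[OF assms(1), of N z] assms(2) by (simp add: algebra_simps)
qed

lemma expE_zero: "expE N 0 = (1 :: 'v::linorder E)"
proof (induction N)
  case 0 thus ?case by (simp add: expE_def cf_def sc_one)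
next
  case (Suc N) thus ?case by (simp add: expE_Suc)
qed

lemma expE_sum:
  fixes f :: "'b \<Rightarrow> 'v::linorder E"
  assumes "finite J" "\<And>j. j \<in> J \<Longrightarrow> f j * f j = 0"
    "\<And>J' j. J' \<subseteq> J \<Longrightarrow> j \<in> J \<Longrightarrow> f j * (\<Sum>i\<in>J'. f i) ^ N = 0"
  shows "expE N (\<Sum>j\<in>J. f j) = (\<Prod>j\<in>J. 1 + f j)"
  using assms
proof (induction J rule: finite_induct)
  case empty
  thus ?case by (simp add: expE_zero)
next
  case (insert k J)
  have "expE N (\<Sum>j\<in>insert k J. f j) = expE N ((\<Sum>j\<in>J. f j) + f k)"
    using insert by (simp add: add.commute)
  also have "\<dots> = expE N (\<Sum>j\<in>J. f j) * (1 + f k)"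
    by (rule expE_add) (use insert in auto)
  also have "expE N (\<Sum>j\<in>J. f j) = (\<Prod>j\<in>J. 1 + f j)"
  proof (rule insert.IH)
    fix j assume "j \<in> J" thus "f j * f j = 0" using insert.prems(1) by auto
  next
    fix J' j assume "J' \<subseteq> J" "j \<in> J"
    thus "f j * (\<Sum>i\<in>J'. f i) ^ N = 0" using insert.prems(2)[of J' j] by auto
  qed
  finally show ?case using insert by (simp add: mult.commute)
qed

section \<open>Berezin for a partition\<close>

lemma ber_partition:
  assumes "finite P" "\<forall>T\<in>P. T \<noteq> {} \<and> finite T" "\<forall>A\<in>P. \<forall>B\<in>P. A \<noteq> B \<longrightarrow> A \<inter> B = {}"
  shows "coef ((\<Prod>T\<in>P. Fp lam T) * (\<Prod>i\<in>\<Union>P. 1 + sc lam * x i)) (\<Union>P \<times> UNIV)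
     / coef (tauE (\<Union>P)) (\<Union>P \<times> UNIV) = lam ^ card P"
proof -
  define v where "v T = (SOME v. v \<in> T)" for T :: "'a set"
  have vT: "v T \<in> T" if "T \<in> P" for T using assms that unfolding v_def by (metis some_in_eq)
  define h where "h T = sc lam * tauE T + Y (v T) T" for T
  have "(\<Prod>i\<in>\<Union>P. 1 + sc lam * x i) = (\<Prod>T\<in>P. \<Prod>i\<in>T. 1 + sc lam * x i)"
    using assms by (subst prod.Union_disjoint) auto
  hence "(\<Prod>T\<in>P. Fp lam T) * (\<Prod>i\<in>\<Union>P. 1 + sc lam * x i) = (\<Prod>T\<in>P. Fp lam T * (\<Prod>i\<in>T. 1 + sc lam * x i))"
    by (simp add: prod.distrib)
  also have "\<dots> = (\<Prod>T\<in>P. h T)"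
    using assms vT by (intro prod.cong refl) (simp add: h_def Fp_prod)
  finally have 1: "(\<Prod>T\<in>P. Fp lam T) * (\<Prod>i\<in>\<Union>P. 1 + sc lam * x i) = (\<Prod>T\<in>P. h T)" .
  have sh: "supp_in (T \<times> UNIV) (h T)" if "T \<in> P" for T
    unfolding h_def using assms that vT by (intro supp_plus supp_sc supp_tau supp_Y) auto
  have ch: "coef (h T) (T \<times> UNIV) = lam * (-1) ^ card T" if "T \<in> P" for T
    unfolding h_def using assms that vT
    by (simp add: coef_plus gadd_def coef_sc_times gsmult_def coef_tau coef_Y_top)
  have 2: "coef (\<Prod>T\<in>P. h T) (\<Union>P \<times> UNIV) = (\<Prod>T\<in>P. lam * (-1) ^ card T)"
  proof -
    have fP: "\<forall>T\<in>P. finite T" using assms by auto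
    have "coef (\<Prod>T\<in>P. h T) (\<Union>P \<times> UNIV) = (\<Prod>T\<in>P. coef (h T) (T \<times> UNIV))"
      using top_prod[of P h] assms(1,3) fP sh by blast
    also have "\<dots> = (\<Prod>T\<in>P. lam * (-1) ^ card T)" using ch by (intro prod.cong) auto
    finally show ?thesis .
  qed
  have t: "tauE (\<Union>P) = (\<Prod>T\<in>P. tauE T)"
    unfolding tauE_def using assms by (subst prod.Union_disjoint) auto
  have 3: "coef (tauE (\<Union>P)) (\<Union>P \<times> UNIV) = (\<Prod>T\<in>P. (-1) ^ card T)"
  proof -
    have fP: "\<forall>T\<in>P. finite T" using assms by auto
    have "coef (\<Prod>T\<in>P. tauE T) (\<Union>P \<times> UNIV) = (\<Prod>T\<in>P. coef (tauE T) (T \<times> UNIV))"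
      using top_prod[of P tauE] assms(1,3) fP supp_tau by blast
    also have "\<dots> = (\<Prod>T\<in>P. (-1) ^ card T)" using fP coef_tau by (intro prod.cong) auto
    finally show ?thesis unfolding t .
  qed
  have nz: "(\<Prod>T\<in>P. ((-1) ^ card T :: complex)) \<noteq> 0" by (simp add: prod_zero_iff assms)
  show ?thesis unfolding 1 2 3 using nz by (simp add: prod.distrib)
qed

section \<open>Walks and cycles\<close>

definition walk :: "'v set set \<Rightarrow> nat \<Rightarrow> (nat \<Rightarrow> 'v) \<Rightarrow> (nat \<Rightarrow> 'v set) \<Rightarrow> bool" where
  "walk F m vs es \<longleftrightarrow> (\<forall>i<m. es i \<in> F \<and> vs i \<in> es i \<and> vs (Suc i) \<in> es i)"

lemma rtrancl_walk:
  assumes "(a, b) \<in> (adj_rel V F)\<^sup>*"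
  shows "\<exists>m vs es. walk F m vs es \<and> vs 0 = a \<and> vs m = b"
  using assms
proof (induction rule: rtrancl_induct)
  case base
  show ?case by (rule exI[of _ 0], rule exI[of _ "\<lambda>_. a"]) (auto simp: walk_def)
next
  case (step b c)
  then obtain m vs es where w: "walk F m vs es" "vs 0 = a" "vs m = b" by blast
  from step(2) obtain A where A: "A \<in> F" "b \<in> A" "c \<in> A" by (auto simp: adj_rel_def)
  define vs' where "vs' = vs(Suc m := c)"
  define es' where "es' = es(m := A)"
  have "walk F (Suc m) vs' es'"
    unfolding walk_def
  proof (intro allI impI)
    fix i assume "i < Suc m"
    show "es' i \<in> F \<and> vs' i \<in> es' i \<and> vs' (Suc i) \<in> es' i"
    proof (cases "i = m")
      case True thus ?thesis using A w by (simp add: vs'_def es'_def)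
    next
      case False hence "i < m" using \<open>i < Suc m\<close> by simp
      thus ?thesis using w(1) by (simp add: walk_def vs'_def es'_def)
    qed
  qed
  moreover have "vs' 0 = a" "vs' (Suc m) = c" using w by (auto simp: vs'_def)
  ultimately show ?case by blast
qed

lemma walk_short_vs:
  assumes w: "walk F m vs es" and ij: "i < j" "j \<le> m" "vs i = vs j"
  shows "\<exists>vs' es'. walk F (m - (j - i)) vs' es' \<and> vs' 0 = vs 0 \<and> vs' (m - (j - i)) = vs m"
proof -
  define d where "d = j - i"
  define vs' where "vs' k = (if k < i then vs k else vs (k + d))" for k
  define es' where "es' k = (if k < i then es k else es (k + d))" for k
  have "walk F (m - d) vs' es'"
    unfolding walk_def
  proof (intro allI impI)
    fix k assume k: "k < m - d"
    show "es' k \<in> F \<and> vs' k \<in> es' k \<and> vs' (Suc k) \<in> es' k"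
    proof (cases "k < i")
      case True
      have "k < m" using True ij by simp
      hence a: "es k \<in> F" "vs k \<in> es k" "vs (Suc k) \<in> es k" using w by (auto simp: walk_def)
      have "vs' (Suc k) = vs (Suc k)"
      proof (cases "Suc k < i")
        case False hence "Suc k = i" using True by simp
        thus ?thesis using ij by (simp add: vs'_def d_def)
      qed (simp add: vs'_def)
      thus ?thesis using a True by (simp add: vs'_def es'_def)
    next
      case False
      have "k + d < m" using k ij d_def by simp
      hence "es (k + d) \<in> F" "vs (k + d) \<in> es (k + d)" "vs (Suc (k + d)) \<in> es (k + d)"
        using w by (auto simp: walk_def)
      thus ?thesis using False by (simp add: vs'_def es'_def)
    qed
  qed
  moreover have "vs' 0 = vs 0"
    using ij by (cases "0 < i") (simp_all add: vs'_def d_def)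
  moreover have "vs' (m - d) = vs m"
  proof -
    have "\<not> m - d < i" using ij unfolding d_def by arith
    moreover have "m - d + d = m" using ij unfolding d_def by arith
    ultimately show ?thesis by (simp add: vs'_def)
  qed
  ultimately show ?thesis unfolding d_def by blast
qed

lemma walk_short_es:
  assumes w: "walk F m vs es" and ij: "i < j" "j < m" "es i = es j"
  shows "\<exists>vs' es'. walk F (m - (j - i)) vs' es' \<and> vs' 0 = vs 0 \<and> vs' (m - (j - i)) = vs m"
proof -
  define d where "d = j - i"
  define vs' where "vs' k = (if k \<le> i then vs k else vs (k + d))" for k
  define es' where "es' k = (if k < i then es k else es (k + d))" for k
  have "walk F (m - d) vs' es'"
    unfolding walk_def
  proof (intro allI impI)
    fix k assume k: "k < m - d"
    show "es' k \<in> F \<and> vs' k \<in> es' k \<and> vs' (Suc k) \<in> es' k"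
    proof (cases "k < i")
      case True
      have "k < m" using True ij by simp
      hence "es k \<in> F" "vs k \<in> es k" "vs (Suc k) \<in> es k" using w by (auto simp: walk_def)
      thus ?thesis using True by (simp add: vs'_def es'_def)
    next
      case False
      show ?thesis
      proof (cases "k = i")
        case True
        have "i < m" "j < m" using ij by auto
        hence "es j \<in> F" "vs i \<in> es i" "vs (Suc j) \<in> es j" using w by (auto simp: walk_def)
        thus ?thesis using True ij by (simp add: vs'_def es'_def d_def)
      next
        case False2: False
        hence ki: "i < k" using False by simp
        have "k + d < m" using k ij d_def by simp
        hence "es (k + d) \<in> F" "vs (k + d) \<in> es (k + d)" "vs (Suc (k + d)) \<in> es (k + d)"
          using w by (auto simp: walk_def)
        thus ?thesis using ki by (simp add: vs'_def es'_def)
      qed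
    qed
  qed
  moreover have "vs' 0 = vs 0" by (simp add: vs'_def)
  moreover have "vs' (m - d) = vs m"
  proof -
    have "\<not> m - d \<le> i" using ij unfolding d_def by arith
    moreover have "m - d + d = m" using ij unfolding d_def by arith
    ultimately show ?thesis by (simp add: vs'_def)
  qed
  ultimately show ?thesis unfolding d_def by blast
qed

lemma min_walk:
  assumes "(a, b) \<in> (adj_rel V F)\<^sup>*"
  shows "\<exists>m vs es. walk F m vs es \<and> vs 0 = a \<and> vs m = b \<and> inj_on vs {..m} \<and> inj_on es {..<m}"
proof -
  define P where "P m \<longleftrightarrow> (\<exists>vs es. walk F m vs es \<and> vs 0 = a \<and> vs m = b)" for m
  have ex: "\<exists>m. P m" using rtrancl_walk[OF assms] by (auto simp: P_def)
  define m where "m = (LEAST m. P m)"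
  have Pm: "P m" unfolding m_def by (rule LeastI_ex[OF ex])
  have minm: "\<not> P m'" if "m' < m" for m' using that not_less_Least unfolding m_def by blast
  from Pm obtain vs es where w: "walk F m vs es" "vs 0 = a" "vs m = b" by (auto simp: P_def)
  have "inj_on vs {..m}"
  proof (rule ccontr)
    assume "\<not> inj_on vs {..m}"
    then obtain i j where "i \<le> m" "j \<le> m" "i \<noteq> j" "vs i = vs j" by (auto simp: inj_on_def)
    then obtain i j where ij: "i < j" "j \<le> m" "vs i = vs j"
      by (metis linorder_neqE_nat)
    from walk_short_vs[OF w(1) ij] have "P (m - (j - i))" using w by (auto simp: P_def)
    moreover have "m - (j - i) < m" using ij by simp
    ultimately show False using minm by blast
  qed
  moreover have "inj_on es {..<m}"
  proof (rule ccontr)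
    assume "\<not> inj_on es {..<m}"
    then obtain i j where "i < m" "j < m" "i \<noteq> j" "es i = es j" by (auto simp: inj_on_def)
    then obtain i j where ij: "i < j" "j < m" "es i = es j"
      by (metis linorder_neqE_nat)
    from walk_short_es[OF w(1) ij] have "P (m - (j - i))" using w by (auto simp: P_def)
    moreover have "m - (j - i) < m" using ij by simp
    ultimately show False using minm by blast
  qed
  ultimately show ?thesis using w by blast
qed

lemma has_cycle_mono: "has_cycle F \<Longrightarrow> F \<subseteq> G \<Longrightarrow> has_cycle G"
  unfolding has_cycle_def by blast

lemma cycle_of_conn:
  assumes "u \<in> B" "v \<in> B" "u \<noteq> v" "(u, v) \<in> (adj_rel V F)\<^sup>*" "B \<notin> F"
  shows "has_cycle (insert B F)"
proof -
  obtain m vs es where w: "walk F m vs es" "vs 0 = u" "vs m = v" "inj_on vs {..m}" "inj_on es {..<m}"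
    using min_walk[OF assms(4)] by blast
  have m1: "m \<ge> 1" using w assms(3) by (cases m) auto
  define vs' where "vs' = vs(Suc m := u)"
  define es' where "es' = es(m := B)"
  have "\<forall>i<Suc m. es' i \<in> insert B F \<and> vs' i \<in> es' i \<and> vs' (Suc i) \<in> es' i"
  proof (intro allI impI)
    fix i assume "i < Suc m"
    show "es' i \<in> insert B F \<and> vs' i \<in> es' i \<and> vs' (Suc i) \<in> es' i"
    proof (cases "i = m")
      case True thus ?thesis using assms w by (simp add: vs'_def es'_def)
    next
      case False hence "i < m" using \<open>i < Suc m\<close> by simp
      thus ?thesis using w(1) by (simp add: walk_def vs'_def es'_def)
    qed
  qed
  moreover have "inj_on vs' {..<Suc m}"
  proof -
    have "{..<Suc m} = {..m}" by auto
    moreover have "\<forall>i\<in>{..m}. vs' i = vs i" by (simp add: vs'_def)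
    ultimately show ?thesis using w(4) by (simp add: inj_on_def)
  qed
  moreover have "vs' (Suc m) = vs' 0" using w by (simp add: vs'_def)
  moreover have "inj_on es' {..<Suc m}"
  proof -
    have "\<forall>i<m. es i \<in> F" using w(1) by (simp add: walk_def)
    hence "\<forall>i<m. es i \<noteq> B" using assms(5) by auto
    thus ?thesis using w(5) unfolding inj_on_def es'_def
      by (metis fun_upd_apply lessThan_iff less_Suc_eq)
  qed
  moreover have "Suc m \<ge> 2" using m1 by simp
  ultimately show ?thesis unfolding has_cycle_def by blast
qed

lemma conn_of_cycle:
  assumes cyc: "has_cycle (insert B F)" and acyc: "\<not> has_cycle F" and sub: "\<forall>A\<in>F. A \<subseteq> V"
  shows "\<exists>u\<in>B. \<exists>v\<in>B. u \<noteq> v \<and> (u, v) \<in> (adj_rel V F)\<^sup>*"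
proof -
  obtain k vs es where c: "k \<ge> 2" "\<forall>i<k. es i \<in> insert B F \<and> vs i \<in> es i \<and> vs (Suc i) \<in> es i"
    "inj_on vs {..<k}" "vs k = vs 0" "inj_on es {..<k}"
    using cyc unfolding has_cycle_def by blast
  have "\<exists>j<k. es j = B"
  proof (rule ccontr)
    assume "\<not> (\<exists>j<k. es j = B)"
    hence "\<forall>i<k. es i \<in> F \<and> vs i \<in> es i \<and> vs (Suc i) \<in> es i" using c(2) by blast
    hence "has_cycle F" unfolding has_cycle_def using c by blast
    thus False using acyc by simp
  qed
  then obtain j where j: "j < k" "es j = B" by blast
  have other: "es i \<in> F" if "i < k" "i \<noteq> j" for i
  proof -
    have "es i \<noteq> es j" using c(5) that j by (auto simp: inj_on_def)
    thus ?thesis using c(2) that j by auto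
  qed
  have adj: "(vs i, vs (Suc i)) \<in> adj_rel V F" if "i < k" "i \<noteq> j" for i
  proof -
    have "es i \<in> F" "vs i \<in> es i" "vs (Suc i) \<in> es i" using other[OF that] c(2) that by auto
    thus ?thesis using sub unfolding adj_rel_def by blast
  qed
  have r1: "(vs 0, vs i) \<in> (adj_rel V F)\<^sup>*" if "i \<le> j" for i
    using that
  proof (induction i)
    case 0 thus ?case by simp
  next
    case (Suc i)
    hence "(vs i, vs (Suc i)) \<in> adj_rel V F" using j by (intro adj) auto
    thus ?case using Suc by (meson Suc_leD rtrancl_into_rtrancl)
  qed
  have r2: "(vs (Suc j), vs (Suc j + n)) \<in> (adj_rel V F)\<^sup>*" if "Suc j + n \<le> k" for n
    using that
  proof (induction n)
    case 0 thus ?case by simp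
  next
    case (Suc n)
    hence "(vs (Suc j + n), vs (Suc (Suc j + n))) \<in> adj_rel V F" by (intro adj) auto
    thus ?case using Suc by (simp add: rtrancl_into_rtrancl)
  qed
  have "(vs (Suc j), vs k) \<in> (adj_rel V F)\<^sup>*" using r2[of "k - Suc j"] j by simp
  hence "(vs (Suc j), vs j) \<in> (adj_rel V F)\<^sup>*" using r1[of j] c(4) by simp
  moreover have "vs (Suc j) \<in> B" "vs j \<in> B" using c(2) j by auto
  moreover have "vs (Suc j) \<noteq> vs j"
  proof (cases "Suc j < k")
    case True thus ?thesis using inj_onD[OF c(3), of "Suc j" j] j by auto
  next
    case False hence "Suc j = k" using j by simp
    hence "vs (Suc j) = vs 0" "j \<noteq> 0" using c by auto
    thus ?thesis using c(3) j by (auto simp: inj_on_def)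
  qed
  ultimately show ?thesis by blast
qed

section \<open>Components\<close>

abbreviation RR :: "'v set \<Rightarrow> 'v set set \<Rightarrow> ('v \<times> 'v) set" where
  "RR V F \<equiv> (adj_rel V F)\<^sup>*"

lemma RR_sym: "(a, b) \<in> RR V F \<Longrightarrow> (b, a) \<in> RR V F"
proof -
  have "sym (adj_rel V F)" by (auto simp: sym_def adj_rel_def)
  hence "sym (RR V F)" by (rule sym_rtrancl)
  thus "(a, b) \<in> RR V F \<Longrightarrow> (b, a) \<in> RR V F" by (auto simp: sym_def)
qed

lemma RR_trans: "(a, b) \<in> RR V F \<Longrightarrow> (b, c) \<in> RR V F \<Longrightarrow> (a, c) \<in> RR V F"
  by (rule rtrancl_trans)

lemma RR_V: "(a, b) \<in> RR V F \<Longrightarrow> a \<in> V \<Longrightarrow> b \<in> V"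
  by (induction rule: rtrancl_induct) (auto simp: adj_rel_def)

lemma RR_mono: "F \<subseteq> G \<Longrightarrow> RR V F \<subseteq> RR V G"
  by (rule rtrancl_mono) (auto simp: adj_rel_def)

lemma class_eq: "(a, b) \<in> RR V F \<Longrightarrow> RR V F `` {a} = RR V F `` {b}"
  by (auto intro: RR_trans RR_sym)

lemma comps_cases: "T \<in> V // RR V F \<Longrightarrow> \<exists>w\<in>V. T = RR V F `` {w}"
  unfolding quotient_def by auto

lemma comps_mem: "w \<in> V \<Longrightarrow> RR V F `` {w} \<in> V // RR V F"
  unfolding quotient_def by auto

lemma class_sub: "w \<in> V \<Longrightarrow> RR V F `` {w} \<subseteq> V"
  using RR_V by fastforce

lemma comps_props:
  assumes "finite V"
  shows "finite (V // RR V F)" "\<forall>T\<in>V // RR V F. T \<noteq> {} \<and> finite T"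
    "\<forall>A\<in>V // RR V F. \<forall>B\<in>V // RR V F. A \<noteq> B \<longrightarrow> A \<inter> B = {}"
    "\<Union>(V // RR V F) = V"
proof -
  show "finite (V // RR V F)" using assms unfolding quotient_def by auto
  show "\<forall>T\<in>V // RR V F. T \<noteq> {} \<and> finite T"
    using assms by (auto dest!: comps_cases intro: finite_subset[OF class_sub])
  show "\<forall>A\<in>V // RR V F. \<forall>B\<in>V // RR V F. A \<noteq> B \<longrightarrow> A \<inter> B = {}"
  proof (intro ballI impI)
    fix A B assume "A \<in> V // RR V F" "B \<in> V // RR V F" "A \<noteq> B"
    then obtain a b where ab: "A = RR V F `` {a}" "B = RR V F `` {b}" by (auto dest!: comps_cases)
    show "A \<inter> B = {}"
    proof (rule ccontr)
      assume "A \<inter> B \<noteq> {}"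
      then obtain z where "(a, z) \<in> RR V F" "(b, z) \<in> RR V F" using ab by auto
      hence "RR V F `` {a} = RR V F `` {b}" by (metis class_eq)
      thus False using ab \<open>A \<noteq> B\<close> by simp
    qed
  qed
  show "\<Union>(V // RR V F) = V"
  proof
    show "\<Union>(V // RR V F) \<subseteq> V" by (auto dest!: comps_cases dest: RR_V)
    show "V \<subseteq> \<Union>(V // RR V F)" unfolding quotient_def by auto
  qed
qed

lemma comps_empty: "V // RR V {} = (\<lambda>w. {w}) ` V"
proof -
  have "adj_rel V {} = {}" by (simp add: adj_rel_def)
  thus ?thesis unfolding quotient_def by auto
qed

definition conn :: "'v set \<Rightarrow> 'v set set \<Rightarrow> 'v set \<Rightarrow> bool" where
  "conn V F B \<longleftrightarrow> (\<exists>u\<in>B. \<exists>v\<in>B. u \<noteq> v \<and> (u, v) \<in> RR V F)"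

lemma step_zero:
  fixes V :: "'v::linorder set"
  assumes "finite V" "B \<subseteq> V" "conn V F B"
  shows "Fp lam B * (\<Prod>T\<in>V // RR V F. Fp lam T) = 0"
proof -
  obtain u v where uv: "u \<in> B" "v \<in> B" "u \<noteq> v" "(u, v) \<in> RR V F" using assms(3) by (auto simp: conn_def)
  define T where "T = RR V F `` {u}"
  have T: "T \<in> V // RR V F" using uv assms by (auto simp: T_def intro: comps_mem)
  have fT: "finite T" using comps_props[OF assms(1)] T by auto
  have "Fp lam B * Fp lam T = 0"
    by (rule Fp_zero[of B T u v]) (use uv assms fT in \<open>auto simp: T_def intro: finite_subset\<close>)
  moreover have "(\<Prod>T\<in>V // RR V F. Fp lam T) = Fp lam T * (\<Prod>T\<in>V // RR V F - {T}. Fp lam T)"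
    using comps_props[OF assms(1)] T by (simp add: prod.remove)
  ultimately show ?thesis by (simp add: mult.assoc[symmetric])
qed

lemma merge_prod:
  fixes B :: "'v::linorder set"
  assumes "finite B" "finite I" "I \<subseteq> B" "\<And>b. b \<in> B \<Longrightarrow> finite (g b) \<and> g b \<inter> B = {b}"
    "\<And>b c. b \<in> B \<Longrightarrow> c \<in> B \<Longrightarrow> b \<noteq> c \<Longrightarrow> g b \<inter> g c = {}"
  shows "Fp lam B * (\<Prod>b\<in>I. Fp lam (g b)) = Fp lam (B \<union> \<Union>(g ` I))"
  using assms(2,3)
proof (induction I rule: finite_induct)
  case empty thus ?case by simp
next
  case (insert c I)
  have c: "c \<in> B" using insert by auto
  have "Fp lam B * (\<Prod>b\<in>insert c I. Fp lam (g b)) = Fp lam (g c) * (Fp lam B * (\<Prod>b\<in>I. Fp lam (g b)))"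
    using insert(1,2) by (simp add: mult_ac)
  also have "\<dots> = Fp lam (g c) * Fp lam (B \<union> \<Union>(g ` I))"
  proof -
    have "Fp lam B * (\<Prod>b\<in>I. Fp lam (g b)) = Fp lam (B \<union> \<Union>(g ` I))" using insert by auto
    thus ?thesis by simp
  qed
  also have "\<dots> = Fp lam (g c \<union> (B \<union> \<Union>(g ` I)))"
  proof (rule Fp_union)
    show "finite (g c)" using assms c by auto
    show "finite (B \<union> \<Union>(g ` I))" using assms insert by (auto intro: finite_subset)
    have "g c \<inter> \<Union>(g ` I) = {}" using assms(5) c insert by blast
    thus "g c \<inter> (B \<union> \<Union>(g ` I)) = {c}" using assms(4)[OF c] by blast
  qed
  also have "g c \<union> (B \<union> \<Union>(g ` I)) = B \<union> \<Union>(g ` insert c I)" by auto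
  finally show ?case .
qed

lemma step_merge:
  fixes V :: "'v::linorder set"
  assumes fV: "finite V" and BV: "B \<subseteq> V" and Bne: "B \<noteq> {}" and nc: "\<not> conn V F B"
  shows "Fp lam B * (\<Prod>T\<in>V // RR V F. Fp lam T) = (\<Prod>T\<in>V // RR V (insert B F). Fp lam T)
     \<and> card (V // RR V (insert B F)) + card B = card (V // RR V F) + 1"
proof -
  let ?R = "RR V F" and ?R' = "RR V (insert B F)"
  define RB where "RB = ?R `` B"
  define P0 where "P0 = {T \<in> V // ?R. T \<inter> B = {}}"
  define PB where "PB = {T \<in> V // ?R. T \<inter> B \<noteq> {}}"
  have fB: "finite B" using fV BV finite_subset by auto
  have B_RB: "B \<subseteq> RB" unfolding RB_def by auto
  have inRB: "w \<in> RB \<longleftrightarrow> ?R `` {w} \<inter> B \<noteq> {}" for w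
    unfolding RB_def by (auto intro: RR_sym)
  have pair: "(w, yy) \<in> ?R' \<longleftrightarrow> (w, yy) \<in> ?R \<or> (w \<in> RB \<and> yy \<in> RB)" for w yy
  proof
    assume "(w, yy) \<in> ?R'"
    thus "(w, yy) \<in> ?R \<or> (w \<in> RB \<and> yy \<in> RB)"
    proof (induction rule: rtrancl_induct)
      case base thus ?case by simp
    next
      case (step yy z)
      from step(2) have yz: "(yy, z) \<in> adj_rel V F \<or> (yy \<in> B \<and> z \<in> B)"
        by (auto simp: adj_rel_def)
      show ?case
      proof (cases "(w, yy) \<in> ?R")
        case xy: True
        show ?thesis
        proof (cases "(yy, z) \<in> adj_rel V F")
          case True thus ?thesis using xy by (meson rtrancl_into_rtrancl)
        next
          case False
          hence "yy \<in> B" "z \<in> B" using yz by auto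
          hence "w \<in> RB" "z \<in> RB" using xy B_RB unfolding RB_def by (auto intro: RR_sym)
          thus ?thesis by simp
        qed
      next
        case False
        hence xy: "w \<in> RB" "yy \<in> RB" using step by auto
        have "z \<in> RB"
        proof (cases "(yy, z) \<in> adj_rel V F")
          case True thus ?thesis using xy unfolding RB_def by (auto intro: rtrancl_into_rtrancl)
        next
          case False thus ?thesis using yz B_RB by auto
        qed
        thus ?thesis using xy by simp
      qed
    qed
  next
    assume a: "(w, yy) \<in> ?R \<or> (w \<in> RB \<and> yy \<in> RB)"
    have sub: "?R \<subseteq> ?R'" by (rule RR_mono) auto
    show "(w, yy) \<in> ?R'"
    proof (cases "(w, yy) \<in> ?R")
      case True thus ?thesis using sub by auto
    next
      case False
      then obtain b c where bc: "b \<in> B" "c \<in> B" "(b, w) \<in> ?R" "(c, yy) \<in> ?R" using a unfolding RB_def by auto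
      have "(b, c) \<in> adj_rel V (insert B F)" using bc BV unfolding adj_rel_def by auto
      hence "(b, c) \<in> ?R'" by auto
      moreover have "(w, b) \<in> ?R'" "(c, yy) \<in> ?R'" using bc sub by (auto intro: RR_sym)
      ultimately show ?thesis by (meson rtrancl_trans)
    qed
  qed
  have cls: "?R' `` {w} = (if w \<in> RB then RB else ?R `` {w})" if "w \<in> V" for w
  proof (cases "w \<in> RB")
    case True
    have "?R `` {w} \<subseteq> RB" using True unfolding RB_def by (auto intro: rtrancl_trans)
    thus ?thesis using True pair by auto
  next
    case False thus ?thesis using pair by auto
  qed
  have P'eq: "V // ?R' = insert RB P0"
  proof
    show "V // ?R' \<subseteq> insert RB P0"
    proof
      fix T assume "T \<in> V // ?R'"
      then obtain w where w: "w \<in> V" "T = ?R' `` {w}" by (auto dest!: comps_cases)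
      show "T \<in> insert RB P0"
      proof (cases "w \<in> RB")
        case True thus ?thesis using cls w by simp
      next
        case False thus ?thesis using cls w inRB comps_mem[OF w(1)] unfolding P0_def by auto
      qed
    qed
    show "insert RB P0 \<subseteq> V // ?R'"
    proof
      fix T assume "T \<in> insert RB P0"
      thus "T \<in> V // ?R'"
      proof
        assume T: "T = RB"
        obtain b where "b \<in> B" using Bne by auto
        hence "b \<in> V" "b \<in> RB" using BV B_RB by auto
        thus ?thesis using cls[of b] comps_mem[of b V "insert B F"] T by simp
      next
        assume "T \<in> P0"
        then obtain w where w: "w \<in> V" "T = ?R `` {w}" "T \<inter> B = {}" unfolding P0_def by (auto dest!: comps_cases)
        hence "w \<notin> RB" using inRB by auto
        thus ?thesis using cls[OF w(1)] comps_mem[OF w(1), of "insert B F"] w by simp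
      qed
    qed
  qed
  have RB_P0: "RB \<notin> P0" using B_RB Bne unfolding P0_def by auto
  define g where "g b = ?R `` {b}" for b
  have gB: "finite (g b) \<and> g b \<inter> B = {b}" if "b \<in> B" for b
  proof
    show "finite (g b)" unfolding g_def using that BV fV by (meson class_sub finite_subset subsetD)
    show "g b \<inter> B = {b}"
    proof
      show "g b \<inter> B \<subseteq> {b}" using nc that unfolding conn_def g_def by auto
      show "{b} \<subseteq> g b \<inter> B" using that unfolding g_def by auto
    qed
  qed
  have gdisj: "g b \<inter> g c = {}" if "b \<in> B" "c \<in> B" "b \<noteq> c" for b c
  proof (rule ccontr)
    assume "g b \<inter> g c \<noteq> {}"
    then obtain z where "(b, z) \<in> ?R" "(c, z) \<in> ?R" unfolding g_def by auto
    hence "(b, c) \<in> ?R" by (meson RR_sym RR_trans)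
    thus False using nc that unfolding conn_def by auto
  qed
  have ginj: "inj_on g B"
  proof (rule inj_onI)
    fix b c assume "b \<in> B" "c \<in> B" "g b = g c"
    thus "b = c" using gdisj gB by (metis Int_absorb singleton_insert_inj_eq)
  qed
  have PB_img: "PB = g ` B"
  proof
    show "PB \<subseteq> g ` B"
    proof
      fix T assume "T \<in> PB"
      then obtain w b where w: "w \<in> V" "T = ?R `` {w}" "b \<in> T" "b \<in> B" unfolding PB_def by (auto dest!: comps_cases)
      hence "T = g b" unfolding g_def using class_eq by fastforce
      thus "T \<in> g ` B" using w by auto
    qed
    show "g ` B \<subseteq> PB"
      unfolding PB_def g_def using BV by (auto intro: comps_mem)
  qed
  have UPB: "B \<union> \<Union>(g ` B) = RB" unfolding g_def RB_def by auto
  have Pdec: "V // ?R = PB \<union> P0" "PB \<inter> P0 = {}" unfolding PB_def P0_def by auto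
  have fP: "finite (V // ?R)" using comps_props[OF fV] by auto
  hence fPB: "finite PB" "finite P0" using Pdec by auto
  have "Fp lam B * (\<Prod>T\<in>V // ?R. Fp lam T) = (Fp lam B * (\<Prod>T\<in>PB. Fp lam T)) * (\<Prod>T\<in>P0. Fp lam T)"
    unfolding Pdec(1) using fPB Pdec(2) by (simp add: prod.union_disjoint mult_ac)
  also have "(\<Prod>T\<in>PB. Fp lam T) = (\<Prod>b\<in>B. Fp lam (g b))"
    unfolding PB_img using ginj by (simp add: prod.reindex)
  also have "Fp lam B * (\<Prod>b\<in>B. Fp lam (g b)) = Fp lam RB"
    using merge_prod[OF fB fB subset_refl gB gdisj] UPB by simp
  also have "Fp lam RB * (\<Prod>T\<in>P0. Fp lam T) = (\<Prod>T\<in>V // ?R'. Fp lam T)"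
    unfolding P'eq using fPB RB_P0 by simp
  finally have 1: "Fp lam B * (\<Prod>T\<in>V // ?R. Fp lam T) = (\<Prod>T\<in>V // ?R'. Fp lam T)" .
  have "card (V // ?R) = card PB + card P0" unfolding Pdec(1) using fPB Pdec(2) by (simp add: card_Un_disjoint)
  moreover have "card PB = card B" unfolding PB_img using ginj by (simp add: card_image)
  moreover have "card (V // ?R') = card P0 + 1" unfolding P'eq using fPB RB_P0 by simp
  ultimately have 2: "card (V // ?R') + card B = card (V // ?R) + 1" by simp
  show ?thesis using 1 2 by simp
qed

lemma card2_obtain:
  assumes "2 \<le> card B"
  obtains u v where "u \<in> B" "v \<in> B" "u \<noteq> v"
proof -
  have "finite B" "B \<noteq> {}" using assms by (auto intro: card_ge_0_finite)
  then obtain u where u: "u \<in> B" by auto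
  have "card (B - {u}) \<ge> 1" using assms u \<open>finite B\<close> by simp
  then obtain v where "v \<in> B - {u}" by (metis card.empty ex_in_conv not_one_le_zero)
  thus ?thesis using that u by auto
qed

lemma conn_bad:
  assumes fV: "finite V" and acyc: "\<not> has_cycle F" and sub: "\<forall>A\<in>F. A \<subseteq> V" and BV: "B \<subseteq> V"
  shows "conn V F B \<longleftrightarrow> ((B \<notin> F \<and> has_cycle (insert B F)) \<or> (B \<in> F \<and> 2 \<le> card B))"
proof (cases "B \<in> F")
  case True
  have fB: "finite B" using fV BV finite_subset by auto
  have "conn V F B \<longleftrightarrow> 2 \<le> card B"
  proof
    assume "conn V F B"
    then obtain u v where "u \<in> B" "v \<in> B" "u \<noteq> v" by (auto simp: conn_def)
    hence "{u, v} \<subseteq> B" "card {u, v} = 2" by auto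
    thus "2 \<le> card B" using fB by (metis card_mono)
  next
    assume "2 \<le> card B"
    then obtain u v where uv: "u \<in> B" "v \<in> B" "u \<noteq> v" by (rule card2_obtain)
    have "(u, v) \<in> adj_rel V F" using uv True BV unfolding adj_rel_def by auto
    thus "conn V F B" using uv unfolding conn_def by auto
  qed
  thus ?thesis using True by simp
next
  case False
  have "conn V F B \<longleftrightarrow> has_cycle (insert B F)"
  proof
    assume "conn V F B"
    then obtain u v where "u \<in> B" "v \<in> B" "u \<noteq> v" "(u, v) \<in> RR V F" by (auto simp: conn_def)
    thus "has_cycle (insert B F)" using cycle_of_conn False by metis
  next
    assume "has_cycle (insert B F)"
    thus "conn V F B" using conn_of_cycle[OF _ acyc sub] unfolding conn_def by blast
  qed
  thus ?thesis using False by simp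
qed

definition bad :: "'v set set \<Rightarrow> 'v set \<Rightarrow> bool" where
  "bad F B \<longleftrightarrow> ((B \<notin> F \<and> has_cycle (insert B F)) \<or> (B \<in> F \<and> 2 \<le> card B))"

lemma step_all:
  fixes V :: "'v::linorder set"
  assumes fV: "finite V" and BV: "B \<subseteq> V" and Bne: "B \<noteq> {}" and sub: "\<forall>A\<in>F. A \<subseteq> V"
    and acyc: "\<not> has_cycle F"
  shows "Fp lam B * (\<Prod>T\<in>V // RR V F. Fp lam T) = (if bad F B then 0 else \<Prod>T\<in>V // RR V (insert B F). Fp lam T)"
    "\<not> bad F B \<Longrightarrow> card (V // RR V (insert B F)) + card B = card (V // RR V F) + 1"
proof -
  have cb: "conn V F B \<longleftrightarrow> bad F B" unfolding bad_def by (rule conn_bad[OF fV acyc sub BV])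
  show "Fp lam B * (\<Prod>T\<in>V // RR V F. Fp lam T) = (if bad F B then 0 else \<Prod>T\<in>V // RR V (insert B F). Fp lam T)"
  proof (cases "bad F B")
    case True thus ?thesis using step_zero[OF fV BV] cb by auto
  next
    case False thus ?thesis using step_merge[OF fV BV Bne] cb by auto
  qed
  show "\<not> bad F B \<Longrightarrow> card (V // RR V (insert B F)) + card B = card (V // RR V F) + 1"
    using step_merge[OF fV BV Bne] cb by auto
qed

definition Phi :: "complex \<Rightarrow> 'v::linorder set \<Rightarrow> 'v set set \<Rightarrow> 'v E" where
  "Phi lam V F = (if has_cycle F then 0 else \<Prod>T\<in>V // RR V F. Fp lam T)"

lemma has_cycle_empty: "\<not> has_cycle {}"
proof
  assume "has_cycle {}"
  then obtain k :: nat and es :: "nat \<Rightarrow> 'a set" where "k \<ge> 2" "\<forall>i<k. es i \<in> ({} :: 'a set set)"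
    unfolding has_cycle_def by blast
  moreover have "(0::nat) < k" using \<open>k \<ge> 2\<close> by simp
  ultimately have "es 0 \<in> ({} :: 'a set set)" by blast
  thus False by simp
qed

lemma claim1:
  fixes V :: "'v::linorder set"
  assumes fV: "finite V" and "finite F" and "\<forall>A\<in>F. A \<subseteq> V \<and> A \<noteq> {}"
  shows "(\<Prod>A\<in>F. Fp lam A) = Phi lam V F"
  using assms(2,3)
proof (induction F rule: finite_induct)
  case empty
  have "(\<Prod>T\<in>V // RR V {}. Fp lam T) = (\<Prod>w\<in>V. Fp lam {w})"
    unfolding comps_empty by (subst prod.reindex) (auto simp: inj_on_def)
  thus ?case by (simp add: Phi_def has_cycle_empty Fp_single)
next
  case (insert A F)
  have IH: "(\<Prod>A\<in>F. Fp lam A) = Phi lam V F" using insert by auto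
  show ?case
  proof (cases "has_cycle F")
    case True
    hence "has_cycle (insert A F)" by (rule has_cycle_mono) auto
    thus ?thesis using True insert IH by (simp add: Phi_def)
  next
    case False
    have "(\<Prod>A\<in>insert A F. Fp lam A) = Fp lam A * (\<Prod>T\<in>V // RR V F. Fp lam T)"
      using insert IH False by (simp add: Phi_def)
    also have "\<dots> = (if bad F A then 0 else \<Prod>T\<in>V // RR V (insert A F). Fp lam T)"
      by (rule step_all(1)[OF fV]) (use insert False in auto)
    also have "\<dots> = Phi lam V (insert A F)"
      using insert by (simp add: bad_def Phi_def)
    finally show ?thesis .
  qed
qed

definition okk :: "'v set set \<Rightarrow> 'v set list \<Rightarrow> bool" where
  "okk F L \<longleftrightarrow> \<not> has_cycle (F \<union> set L) \<and> (\<forall>C\<in>set L. 2 \<le> card C \<longrightarrow> C \<notin> F)"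

lemma claim2:
  fixes V :: "'v::linorder set"
  assumes fV: "finite V" and "distinct L" and "\<forall>A\<in>F \<union> set L. A \<subseteq> V \<and> A \<noteq> {}"
  shows "prod_list (map (Fp lam) L) * Phi lam V F = (if okk F L then \<Prod>T\<in>V // RR V (F \<union> set L). Fp lam T else 0)
    \<and> (okk F L \<longrightarrow> int (card (V // RR V (F \<union> set L))) = int (card (V // RR V F)) - (\<Sum>C\<leftarrow>L. int (card C) - 1))"
  using assms(2,3)
proof (induction L)
  case Nil
  show ?case by (simp add: okk_def Phi_def)
next
  case (Cons C L)
  let ?G = "F \<union> set L"
  have IH: "prod_list (map (Fp lam) L) * Phi lam V F = (if okk F L then \<Prod>T\<in>V // RR V ?G. Fp lam T else 0)"
    "okk F L \<longrightarrow> int (card (V // RR V ?G)) = int (card (V // RR V F)) - (\<Sum>C\<leftarrow>L. int (card C) - 1)"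
    using Cons by auto
  have CL: "C \<notin> set L" using Cons by auto
  have CV: "C \<subseteq> V" "C \<noteq> {}" using Cons by auto
  have eqG: "F \<union> set (C # L) = insert C ?G" by auto
  show ?case
  proof (cases "okk F L")
    case False
    have "\<not> okk F (C # L)"
    proof
      assume o: "okk F (C # L)"
      have "\<not> has_cycle ?G" using o has_cycle_mono[of ?G "F \<union> set (C # L)"] unfolding okk_def by auto
      moreover have "\<forall>C\<in>set L. 2 \<le> card C \<longrightarrow> C \<notin> F" using o unfolding okk_def by auto
      ultimately show False using False unfolding okk_def by simp
    qed
    thus ?thesis using IH False by (simp add: mult.assoc)
  next
    case True
    have acyc: "\<not> has_cycle ?G" using True unfolding okk_def by simp
    have subG: "\<forall>A\<in>?G. A \<subseteq> V" using Cons by auto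
    have "prod_list (map (Fp lam) (C # L)) * Phi lam V F = Fp lam C * (\<Prod>T\<in>V // RR V ?G. Fp lam T)"
      using IH True by (simp add: mult.assoc)
    also have "\<dots> = (if bad ?G C then 0 else \<Prod>T\<in>V // RR V (insert C ?G). Fp lam T)"
      by (rule step_all(1)[OF fV CV subG acyc])
    finally have 1: "prod_list (map (Fp lam) (C # L)) * Phi lam V F = (if bad ?G C then 0 else \<Prod>T\<in>V // RR V (insert C ?G). Fp lam T)" .
    have okb: "okk F (C # L) \<longleftrightarrow> \<not> bad ?G C"
    proof (cases "C \<in> ?G")
      case True
      hence "C \<in> F" using CL by auto
      moreover have "insert C ?G = ?G" using True by auto
      ultimately show ?thesis using \<open>okk F L\<close> True unfolding okk_def bad_def eqG by auto
    next
      case False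
      hence "C \<notin> F" by auto
      thus ?thesis using \<open>okk F L\<close> False unfolding okk_def bad_def eqG by auto
    qed
    have 2: "okk F (C # L) \<longrightarrow> int (card (V // RR V (F \<union> set (C # L)))) = int (card (V // RR V F)) - (\<Sum>C\<leftarrow>C # L. int (card C) - 1)"
    proof
      assume o: "okk F (C # L)"
      have "card (V // RR V (insert C ?G)) + card C = card (V // RR V ?G) + 1"
        using step_all(2)[OF fV CV subG acyc] okb o by auto
      thus "int (card (V // RR V (F \<union> set (C # L)))) = int (card (V // RR V F)) - (\<Sum>C\<leftarrow>C # L. int (card C) - 1)"
        using IH(2) True unfolding eqG by simp
    qed
    show ?thesis using 1 2 okb unfolding eqG by simp
  qed
qed

lemma sc_prod: "sc (\<Prod>A\<in>F. f A) = (\<Prod>A\<in>F. (sc (f A) :: 'v::linorder E))"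
proof (cases "finite F")
  case True thus ?thesis by (induction F rule: finite_induct) (simp_all add: sc_one sc_mult)
next
  case False thus ?thesis by (simp add: sc_one)
qed

lemma Fp_deg:
  fixes A :: "'v::linorder set"
  assumes "finite A" "2 \<le> card A"
  shows "lowdeg 2 (Fp lam A) \<and> supp_in (A \<times> UNIV) (Fp lam A)"
proof -
  obtain v where v: "v \<in> A" using assms by (metis card2_obtain)
  have e: "Fp lam A = sc (lam * (1 - of_nat (card A))) * tauE A + Y v A" using Fp_Y[OF assms(1) v] .
  have "lowdeg (2 * card A) (tauE A)" using homog_tau[OF assms(1)] by (rule homog_lowdeg)
  hence l1: "lowdeg 2 (tauE A)" by (rule lowdeg_mono) (use assms in simp)
  have "card (A - {v}) \<ge> 1" using assms v by simp
  hence l2: "lowdeg 2 (Y v A)"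
    using homog_lowdeg[OF homog_Y[OF assms(1), of v]] lowdeg_mono by fastforce
  have "lowdeg 2 (Fp lam A)" unfolding e by (intro lowdeg_plus lowdeg_sc l1 l2)
  moreover have "supp_in (A \<times> UNIV) (Fp lam A)" unfolding e
    by (intro supp_plus supp_sc supp_tau supp_Y assms(1) v)
  ultimately show ?thesis by simp
qed

lemma Fp_sq: "finite A \<Longrightarrow> 2 \<le> card A \<Longrightarrow> Fp lam A * Fp lam A = 0"
  by (metis card2_obtain Fp_zero)

lemma exp_factor:
  fixes V :: "'v::linorder set" and E :: "'v set set"
  assumes fV: "finite V" and fE: "finite E" and subE: "\<forall>A\<in>E. A \<subseteq> V \<and> 2 \<le> card A"
  shows "expE (2 * card V) (sc lam * (\<Sum>i\<in>V. x i) + (\<Sum>A\<in>E. sc (w A) * Fp lam A))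
       = (\<Prod>i\<in>V. 1 + sc lam * x i) * (\<Prod>A\<in>E. 1 + sc (w A) * Fp lam A)"
proof -
  define f where "f = case_sum (\<lambda>i. sc lam * x i) (\<lambda>A. sc (w A) * Fp lam A)"
  let ?J = "V <+> E"
  have finA: "finite A \<and> 2 \<le> card A \<and> A \<subseteq> V" if "A \<in> E" for A
    using subE that fV by (meson finite_subset)
  have fJ: "finite ?J" using fV fE by simp
  have props: "lowdeg 2 (f j) \<and> supp_in (V \<times> UNIV) (f j)" if "j \<in> ?J" for j
  proof (cases j)
    case (Inl i)
    hence i: "i \<in> V" using that by auto
    have "lowdeg 2 (f j)" unfolding f_def Inl by (simp add: lowdeg_sc homog_lowdeg homog_x)
    moreover have "supp_in (V \<times> UNIV) (f j)" unfolding f_def Inl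
      by (simp, rule supp_sc, rule supp_mono[OF supp_x]) (use i in auto)
    ultimately show ?thesis by simp
  next
    case (Inr A)
    hence A: "A \<in> E" using that by auto
    hence fA: "finite A" "2 \<le> card A" "A \<subseteq> V" using finA by auto
    have "lowdeg 2 (f j) \<and> supp_in (A \<times> UNIV) (f j)" unfolding f_def Inr
      using Fp_deg[OF fA(1,2), of lam] by (simp add: lowdeg_sc supp_sc)
    moreover have "A \<times> (UNIV :: bool set) \<subseteq> V \<times> UNIV" using fA by auto
    ultimately show ?thesis using supp_mono by blast
  qed
  have sq: "f j * f j = 0" if "j \<in> ?J" for j
  proof (cases j)
    case (Inl i)
    have "f j * f j = sc lam * sc lam * (x i * x i)" unfolding f_def Inl by (simp add: mult_ac)
    thus ?thesis by (simp add: x_sq)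
  next
    case (Inr A)
    hence A: "A \<in> E" using that by auto
    hence fA: "finite A" "2 \<le> card A" using finA by auto
    have "f j * f j = sc (w A) * sc (w A) * (Fp lam A * Fp lam A)" unfolding f_def Inr by (simp add: mult_ac)
    thus ?thesis by (simp add: Fp_sq[OF fA])
  qed
  have nil: "f j * (\<Sum>i\<in>J'. f i) ^ (2 * card V) = 0" if "J' \<subseteq> ?J" "j \<in> ?J" for J' j
  proof (rule zero_by_degree)
    have fJ': "finite J'" using that(1) fJ by (rule finite_subset)
    have s: "lowdeg 2 (\<Sum>i\<in>J'. f i)" "supp_in (V \<times> UNIV) (\<Sum>i\<in>J'. f i)"
      using props that fJ' by (auto intro!: lowdeg_sum supp_sum)
    have "lowdeg (2 + 2 * card V * 2) (f j * (\<Sum>i\<in>J'. f i) ^ (2 * card V))"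
    proof (rule lowdeg_times)
      show "lowdeg 2 (f j)" using props that by auto
      show "lowdeg (2 * card V * 2) ((\<Sum>i\<in>J'. f i) ^ (2 * card V))" by (rule lowdeg_power[OF s(1)])
    qed
    thus "lowdeg (2 + 2 * card V * 2) (f j * (\<Sum>i\<in>J'. f i) ^ (2 * card V))" .
    have "supp_in ((V \<times> UNIV) \<union> (V \<times> UNIV)) (f j * (\<Sum>i\<in>J'. f i) ^ (2 * card V))"
      using props that supp_power[OF s(2)] by (intro supp_times) auto
    thus "supp_in (V \<times> UNIV) (f j * (\<Sum>i\<in>J'. f i) ^ (2 * card V))" by simp
    show "finite (V \<times> (UNIV :: bool set))" using fV by simp
    show "card (V \<times> (UNIV :: bool set)) < 2 + 2 * card V * 2"
      by (simp add: card_cartesian_product card_UNIV_bool)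
  qed
  have "expE (2 * card V) (\<Sum>j\<in>?J. f j) = (\<Prod>j\<in>?J. 1 + f j)"
    by (rule expE_sum[OF fJ sq nil]) auto
  moreover have "(\<Sum>j\<in>?J. f j) = sc lam * (\<Sum>i\<in>V. x i) + (\<Sum>A\<in>E. sc (w A) * Fp lam A)"
    using fV fE by (simp add: sum.Plus f_def sum_distrib_left comp_def)
  moreover have "(\<Prod>j\<in>?J. 1 + f j) = (\<Prod>i\<in>V. 1 + sc lam * x i) * (\<Prod>A\<in>E. 1 + sc (w A) * Fp lam A)"
    using fV fE by (simp add: prod.Plus f_def comp_def)
  ultimately show ?thesis by simp
qed

lemma gsum_cong: "(\<And>a. a \<in> I \<Longrightarrow> f a = g a) \<Longrightarrow> gsum f I = gsum g I"
  unfolding gsum_def by (rule ext, rule sum.cong) auto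

lemma coef_sum_at: "coef (\<Sum>i\<in>I. f i) U = (\<Sum>i\<in>I. coef (f i) U)"
  by (simp add: coef_sum gsum_def)

lemma coef_sc_at: "coef (sc c * a) U = c * coef a U"
  by (simp add: coef_sc_times gsmult_def)

theorem corollary5p7:
  fixes V :: "'v::linorder set" and E :: "'v set set" and w :: "'v set \<Rightarrow> complex"
    and lam :: complex and Cs :: "'v set list"
  assumes "hypergraph V E"
    and "\<forall>C\<in>set Cs. C \<noteq> {} \<and> C \<subseteq> V"
    and "\<forall>a<length Cs. \<forall>b<length Cs. a \<noteq> b \<longrightarrow> Cs ! a \<inter> Cs ! b = {}"
  shows "berezin V
           (gmul (glistprod (map (fpoly lam) Cs))
                 (gexp V (gadd (gsmult lam (gsum (\<lambda>i. gmul (psibar i) (psi i)) V))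
                               (gsum (\<lambda>A. gsmult (w A) (fpoly lam A)) E))))
       = (\<Sum>F\<in>hyperforests_avoiding V E Cs.
            (\<Prod>A\<in>F. w A) * lam powi (int (ncomp V F) - (\<Sum>C\<leftarrow>Cs. int (card C) - 1)))"
proof -
  have fV: "finite V" and subE: "\<forall>A\<in>E. A \<subseteq> V \<and> 2 \<le> card A"
    using assms(1) by (auto simp: hypergraph_def)
  have fE: "finite E" using subE fV by (meson Pow_iff finite_Pow_iff finite_subset subsetI)
  have finA: "finite A" if "A \<in> E" for A using subE that fV by (meson finite_subset)
  have finC: "finite C" if "C \<in> set Cs" for C using assms(2) that fV by (meson finite_subset)
  have dCs: "distinct Cs"
    unfolding distinct_conv_nth using assms(2,3) by (metis Int_absorb nth_mem)
  define PC where "PC = prod_list (map (Fp lam) Cs)"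
  define X where "X = sc lam * (\<Sum>i\<in>V. x i) + (\<Sum>A\<in>E. sc (w A) * Fp lam A)"
  define PV where "PV = (\<Prod>i\<in>V. 1 + sc lam * x i)"
  define U where "U = V \<times> (UNIV :: bool set)"
  define HA where "HA = hyperforests_avoiding V E Cs"
  define Sg where "Sg = (\<Sum>C\<leftarrow>Cs. int (card C) - 1)"
  have t1: "glistprod (map (fpoly lam) Cs) = coef PC"
  proof -
    have m: "map (fpoly lam) Cs = map (\<lambda>C. coef (Fp lam C)) Cs"
      by (rule map_cong[OF refl]) (simp add: coef_Fp finC)
    show ?thesis unfolding glistprod_def PC_def coef_prod_list m ..
  qed
  have t2: "gadd (gsmult lam (gsum (\<lambda>i. gmul (psibar i) (psi i)) V)) (gsum (\<lambda>A. gsmult (w A) (fpoly lam A)) E) = coef X"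
  proof -
    have "coef X = gadd (gsmult lam (gsum (\<lambda>i. coef (x i)) V)) (gsum (\<lambda>A. gsmult (w A) (coef (Fp lam A))) E)"
      unfolding X_def by (simp add: coef_plus coef_sc_times coef_sum)
    also have "gsum (\<lambda>A. gsmult (w A) (coef (Fp lam A))) E = gsum (\<lambda>A. gsmult (w A) (fpoly lam A)) E"
      by (rule gsum_cong) (simp add: coef_Fp finA)
    finally show ?thesis by (simp add: coef_x_gen)
  qed
  have lhs: "berezin V (gmul (glistprod (map (fpoly lam) Cs))
                 (gexp V (gadd (gsmult lam (gsum (\<lambda>i. gmul (psibar i) (psi i)) V))
                               (gsum (\<lambda>A. gsmult (w A) (fpoly lam A)) E))))
      = coef (PC * expE (2 * card V) X) U / coef (tauE V) U"
    unfolding t1 t2 coef_expE berezin_def U_def by (simp add: coef_times tau_coef fV)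
  have ex: "expE (2 * card V) X = PV * (\<Sum>F\<in>Pow E. sc (\<Prod>A\<in>F. w A) * (\<Prod>A\<in>F. Fp lam A))"
  proof -
    have "expE (2 * card V) X = PV * (\<Prod>A\<in>E. 1 + sc (w A) * Fp lam A)"
      unfolding X_def PV_def by (rule exp_factor[OF fV fE subE])
    also have "(\<Prod>A\<in>E. 1 + sc (w A) * Fp lam A) = (\<Prod>A\<in>E. sc (w A) * Fp lam A + 1)"
      by (simp add: add.commute)
    also have "\<dots> = (\<Sum>F\<in>Pow E. (\<Prod>A\<in>F. sc (w A) * Fp lam A) * (\<Prod>A\<in>E - F. 1))"
      by (rule prod_add[OF fE])
    also have "\<dots> = (\<Sum>F\<in>Pow E. sc (\<Prod>A\<in>F. w A) * (\<Prod>A\<in>F. Fp lam A))"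
      by (simp add: prod.distrib sc_prod)
    finally show ?thesis .
  qed
  have key: "PC * (\<Prod>A\<in>F. Fp lam A) = (if F \<in> HA then \<Prod>T\<in>V // RR V (F \<union> set Cs). Fp lam T else 0)
     \<and> (F \<in> HA \<longrightarrow> int (card (V // RR V (F \<union> set Cs))) = int (ncomp V F) - Sg)" if F: "F \<in> Pow E" for F
  proof -
    have fF: "finite F" using F fE finite_subset by auto
    have edges: "\<forall>A\<in>F \<union> set Cs. A \<subseteq> V \<and> A \<noteq> {}"
      using F subE assms(2) by fastforce
    have c1: "(\<Prod>A\<in>F. Fp lam A) = Phi lam V F"
      by (rule claim1[OF fV fF]) (use edges in auto)
    note c2 = claim2[OF fV dCs edges, of lam]
    have okHA: "okk F Cs \<longleftrightarrow> F \<in> HA"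
    proof
      assume o: "okk F Cs"
      have "\<not> has_cycle F" using o has_cycle_mono[of F "F \<union> set Cs"] unfolding okk_def by auto
      moreover have "\<forall>C\<in>set Cs. C \<notin> F" using o F subE unfolding okk_def by auto
      ultimately show "F \<in> HA" using o F unfolding okk_def HA_def hyperforests_avoiding_def hyperforest_def by auto
    next
      assume "F \<in> HA"
      thus "okk F Cs" unfolding okk_def HA_def hyperforests_avoiding_def hyperforest_def by auto
    qed
    show ?thesis using c2 okHA unfolding c1 PC_def Sg_def ncomp_def by (simp add: mult.commute)
  qed
  have berF: "coef ((\<Prod>T\<in>V // RR V G. Fp lam T) * PV) U / coef (tauE V) U = lam ^ card (V // RR V G)" for G
  proof -
    note cp = comps_props[OF fV, of G]
    have "coef ((\<Prod>T\<in>V // RR V G. Fp lam T) * (\<Prod>i\<in>\<Union>(V // RR V G). 1 + sc lam * x i)) (\<Union>(V // RR V G) \<times> UNIV)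
       / coef (tauE (\<Union>(V // RR V G))) (\<Union>(V // RR V G) \<times> UNIV) = lam ^ card (V // RR V G)"
      by (rule ber_partition) (use cp in auto)
    thus ?thesis unfolding PV_def U_def cp(4) .
  qed
  have "PC * expE (2 * card V) X = (\<Sum>F\<in>Pow E. sc (\<Prod>A\<in>F. w A) * ((PC * (\<Prod>A\<in>F. Fp lam A)) * PV))"
    unfolding ex by (simp add: sum_distrib_left mult_ac)
  hence "coef (PC * expE (2 * card V) X) U / coef (tauE V) U
      = (\<Sum>F\<in>Pow E. (\<Prod>A\<in>F. w A) * (coef ((PC * (\<Prod>A\<in>F. Fp lam A)) * PV) U / coef (tauE V) U))"
    by (simp add: coef_sum_at coef_sc_at sum_divide_distrib)
  also have "\<dots> = (\<Sum>F\<in>Pow E. if F \<in> HA then (\<Prod>A\<in>F. w A) * lam ^ card (V // RR V (F \<union> set Cs)) else 0)"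
  proof (rule sum.cong[OF refl])
    fix F assume F: "F \<in> Pow E"
    show "(\<Prod>A\<in>F. w A) * (coef ((PC * (\<Prod>A\<in>F. Fp lam A)) * PV) U / coef (tauE V) U)
       = (if F \<in> HA then (\<Prod>A\<in>F. w A) * lam ^ card (V // RR V (F \<union> set Cs)) else 0)"
      using key[OF F] berF[of "F \<union> set Cs"] by (auto simp: coef_zero simp del: times_divide_eq_right)
  qed
  also have "\<dots> = (\<Sum>F\<in>HA. (\<Prod>A\<in>F. w A) * lam ^ card (V // RR V (F \<union> set Cs)))"
  proof -
    have "HA \<subseteq> Pow E" unfolding HA_def hyperforests_avoiding_def by auto
    hence "{F \<in> Pow E. F \<in> HA} = HA" by auto
    moreover have "finite (Pow E)" using fE by simp
    ultimately show ?thesis using sum.inter_filter[of "Pow E" "\<lambda>F. (\<Prod>A\<in>F. w A) * lam ^ card (V // RR V (F \<union> set Cs))" "\<lambda>F. F \<in> HA"]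
      by simp
  qed
  also have "\<dots> = (\<Sum>F\<in>HA. (\<Prod>A\<in>F. w A) * lam powi (int (ncomp V F) - Sg))"
  proof (rule sum.cong[OF refl])
    fix F assume F: "F \<in> HA"
    hence "F \<in> Pow E" unfolding HA_def hyperforests_avoiding_def by auto
    hence "int (ncomp V F) - Sg = int (card (V // RR V (F \<union> set Cs)))" using key F by auto
    thus "(\<Prod>A\<in>F. w A) * lam ^ card (V // RR V (F \<union> set Cs)) = (\<Prod>A\<in>F. w A) * lam powi (int (ncomp V F) - Sg)"
      by simp
  qed
  finally show ?thesis unfolding lhs HA_def Sg_def .
qed

end
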